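(* (1) Given a family $(\ell_{s,t})_{(s,t)\in\Delta}$ of transition kernels of a branching process on $\mathbb N_0^*$, the functions $F_{s,t}(z)=\sum_{n\ge0}\ell_{s,t}(1,\{n\})z^n$, $z\in\mathbb D$, form a topological reverse evolution family in $\mathbb D$ contained in $\mathcal{PGF}$. (2) Conversely, given a topological reverse evolution family $(F_{s,t})_{(s,t)\in\Delta}$ in $\mathbb D$ contained in $\mathcal{PGF}$, there exists a unique family $(\ell_{s,t})_{(s,t)\in\Delta}$ of transition kernels of a branching process on $\mathbb N_0^*$ such that $F_{s,t}(z)=\sum_{n\ge0}\ell_{s,t}(1,\{n\})z^n$ for all $z\in\mathbb D$, $(s,t)\in\Delta$.
   Context: $\Delta=\{(s,t):0\le s\le t\}$, $\mathbb D=\{|z|<1\}$, $\mathbb N_0=\{0,1,2,\dots\}$, $\mathbb N_0^*=\mathbb N_0\cup\{\infty\}$ with its natural compact topology. A family of transition kernels of a branching process on $\mathbb N_0^*$ is a family $(\ell_{s,t})_{(s,t)\in\Delta}$ of transition kernels on $\mathbb N_0^*$ with: (L1) $\ell_{s,s}(n,\cdot)=\delta_n$; (L2) $\ell_{s,t}\star\ell_{t,u}=\ell_{s,u}$ for $s\le t\le u$, where $(k\star l)(x,B)=\int l(y,B)k(x,\mathrm dy)$; (L3) for each $n\in\mathbb N_0$, $(s,t)\mapsto\ell_{s,t}(n,\cdot)$ is weakly continuous into probability measures on $\mathbb N_0^*$; (L4) $\ell_{s,t}(m,\cdot)\ast\ell_{s,t}(n,\cdot)=\ell_{s,t}(m+n,\cdot)$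 for $m,n\in\mathbb N_0$; (L5) $\ell_{s,t}(0,\cdot)=\delta_0$; (L6) $\ell_{s,t}(\infty,\cdot)=\delta_\infty$. $\mathcal{PGF}$ is the set of power series $\sum_{n\ge0}p_nz^n$ with $p_n\ge0$, $\sum p_n\le1$, excluding the constant $1$; it is a subset of ${\sf Hol}(\mathbb D,\mathbb D)$. A topological reverse evolution family in $\mathbb D$ is $(F_{s,t})\subset{\sf Hol}(\mathbb D,\mathbb D)$ with $F_{s,s}={\rm id}$, $F_{s,u}=F_{s,t}\circ F_{t,u}$ ($s\le t\le u$), and $(s,t)\mapsto F_{s,t}$ continuous for locally uniform convergence. *)

theory Defs
  imports "HOL-Probability.Probability" "HOL-Library.Extended_Nat"
begin

definition Delta :: "(real \<times> real) set" where
  "Delta = {(s, t). 0 \<le> s \<and> s \<le> t}"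

abbreviation unit_disc :: "complex set" where
  "unit_disc \<equiv> ball 0 1"

text \<open>Transition kernels on N_0^* (type enat, with its order topology, i.e. the
  one-point compactification of N_0).  Since N_0^* is countable and its Borel
  sigma-algebra is the power set, a transition kernel is a map
  enat => enat pmf.\<close>

definition kernel_comp :: "('a \<Rightarrow> 'a pmf) \<Rightarrow> ('a \<Rightarrow> 'a pmf) \<Rightarrow> ('a \<Rightarrow> 'a pmf)" where
  "kernel_comp k l = (\<lambda>x. bind_pmf (k x) l)"

definition conv_pmf :: "enat pmf \<Rightarrow> enat pmf \<Rightarrow> enat pmf" where
  "conv_pmf p q = map_pmf (\<lambda>(a, b). a + b) (pair_pmf p q)"

definition branching_kernels :: "(real \<Rightarrow> real \<Rightarrow> enat \<Rightarrow> enat pmf) \<Rightarrow> bool" where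
  "branching_kernels L \<longleftrightarrow>
     (\<forall>s n. 0 \<le> s \<longrightarrow> L s s n = return_pmf n) \<and>
     (\<forall>s t u. 0 \<le> s \<and> s \<le> t \<and> t \<le> u \<longrightarrow> kernel_comp (L s t) (L t u) = L s u) \<and>
     (\<forall>n::nat. \<forall>f::enat \<Rightarrow> real. continuous_on UNIV f \<longrightarrow>
        continuous_on Delta (\<lambda>(s, t). measure_pmf.expectation (L s t (enat n)) f)) \<and>
     (\<forall>(s, t)\<in>Delta. \<forall>m n::nat.
        conv_pmf (L s t (enat m)) (L s t (enat n)) = L s t (enat (m + n))) \<and>
     (\<forall>(s, t)\<in>Delta. L s t 0 = return_pmf 0) \<and>
     (\<forall>(s, t)\<in>Delta. L s t \<infinity> = return_pmf \<infinity>)"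

definition gen_fun :: "(real \<Rightarrow> real \<Rightarrow> enat \<Rightarrow> enat pmf) \<Rightarrow> real \<Rightarrow> real \<Rightarrow> complex \<Rightarrow> complex" where
  "gen_fun L s t z = (\<Sum>n. complex_of_real (pmf (L s t 1) (enat n)) * z ^ n)"

definition in_PGF :: "(complex \<Rightarrow> complex) \<Rightarrow> bool" where
  "in_PGF F \<longleftrightarrow>
     (\<exists>p :: nat \<Rightarrow> real. (\<forall>n. 0 \<le> p n) \<and> summable p \<and> suminf p \<le> 1 \<and>
        (\<forall>z\<in>unit_disc. F z = (\<Sum>n. complex_of_real (p n) * z ^ n))) \<and>
     \<not> (\<forall>z\<in>unit_disc. F z = 1)"

definition top_rev_evol_family :: "(real \<Rightarrow> real \<Rightarrow> complex \<Rightarrow> complex) \<Rightarrow> bool" where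
  "top_rev_evol_family F \<longleftrightarrow>
     (\<forall>(s, t)\<in>Delta. F s t holomorphic_on unit_disc \<and> F s t ` unit_disc \<subseteq> unit_disc) \<and>
     (\<forall>s z. 0 \<le> s \<and> z \<in> unit_disc \<longrightarrow> F s s z = z) \<and>
     (\<forall>s t u z. 0 \<le> s \<and> s \<le> t \<and> t \<le> u \<and> z \<in> unit_disc \<longrightarrow> F s u z = F s t (F t u z)) \<and>
     (\<forall>st0\<in>Delta. \<forall>K. compact K \<and> K \<subseteq> unit_disc \<longrightarrow>
        uniform_limit K (\<lambda>(s, t). F s t) (F (fst st0) (snd st0)) (at st0 within Delta))"

end

theory Submission
  imports Defs "HOL-Complex_Analysis.Complex_Analysis"
begin

lemma nn_enat:
  fixes f :: "enat \<Rightarrow> ennreal"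
  shows "(\<integral>\<^sup>+x. f x \<partial>count_space UNIV) = (\<Sum>n. f (enat n)) + f \<infinity>"
proof -
  have split: "f x = f x * indicator (range enat) x + f x * indicator {\<infinity>} x" for x
    by (cases x) (auto simp: indicator_def)
  have "(\<integral>\<^sup>+x. f x \<partial>count_space UNIV) =
     (\<integral>\<^sup>+x. f x * indicator (range enat) x \<partial>count_space UNIV) + (\<integral>\<^sup>+x. f x * indicator {\<infinity>} x \<partial>count_space UNIV)"
    by (subst split) (rule nn_integral_add, auto)
  also have "(\<integral>\<^sup>+x. f x * indicator (range enat) x \<partial>count_space UNIV) = (\<integral>\<^sup>+x. f x \<partial>count_space (range enat))"
    by (simp add: nn_integral_count_space_indicator)
  also have "\<dots> = (\<integral>\<^sup>+n. f (enat n) \<partial>count_space UNIV)"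
    by (rule nn_integral_bij_count_space[symmetric]) (auto simp: bij_betw_def inj_on_def)
  also have "\<dots> = (\<Sum>n. f (enat n))" by (rule nn_integral_count_space_nat)
  also have "(\<integral>\<^sup>+x. f x * indicator {\<infinity>} x \<partial>count_space UNIV) = f \<infinity>"
    by (simp add: nn_integral_count_space_indicator[symmetric] nn_integral_count_space_finite)
  finally show ?thesis .
qed

lemma nn_pmf_enat:
  fixes p :: "enat pmf"
  shows "(\<integral>\<^sup>+x. f x \<partial>measure_pmf p) = (\<Sum>n. ennreal (pmf p (enat n)) * f (enat n)) + ennreal (pmf p \<infinity>) * f \<infinity>"
  by (simp add: nn_integral_measure_pmf nn_enat)

lemma pmf_enat_summable: "summable (\<lambda>n. pmf (p::enat pmf) (enat n))"
  and pmf_enat_sum: "(\<Sum>n. pmf p (enat n)) + pmf p \<infinity> = 1"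
proof -
  have e: "(\<integral>\<^sup>+x. (1::ennreal) \<partial>measure_pmf p) = 1" by simp
  have 1: "(1::ennreal) = (\<Sum>n. ennreal (pmf p (enat n))) + ennreal (pmf p \<infinity>)"
    using nn_pmf_enat[of p "\<lambda>_. 1"] unfolding e by simp
  have nt: "(\<Sum>n. ennreal (pmf p (enat n))) \<noteq> top"
  proof
    assume "(\<Sum>n. ennreal (pmf p (enat n))) = top"
    with 1 have "(1::ennreal) = top" by simp
    thus False by simp
  qed
  show s: "summable (\<lambda>n. pmf (p::enat pmf) (enat n))"
    by (rule summable_suminf_not_top[OF _ nt]) simp
  have "(\<Sum>n. ennreal (pmf p (enat n))) = ennreal (\<Sum>n. pmf p (enat n))"
    using nt by simp
  with 1 have "ennreal 1 = ennreal ((\<Sum>n. pmf p (enat n)) + pmf p \<infinity>)"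
    by (simp add: ennreal_plus suminf_nonneg[OF s])
  thus "(\<Sum>n. pmf p (enat n)) + pmf p \<infinity> = 1"
    by (subst (asm) ennreal_inj) (auto intro!: add_nonneg_nonneg suminf_nonneg[OF s])
qed

lemma pmf_enat_sum_le: "(\<Sum>n. pmf (p::enat pmf) (enat n)) \<le> 1"
  using pmf_enat_sum[of p] pmf_nonneg[of p \<infinity>] by linarith

definition hz :: "real \<Rightarrow> enat \<Rightarrow> ennreal" where
  "hz z x = (case x of enat n \<Rightarrow> ennreal (z ^ n) | \<infinity> \<Rightarrow> 0)"

definition pgfR :: "enat pmf \<Rightarrow> real \<Rightarrow> real" where
  "pgfR p z = (\<Sum>n. pmf p (enat n) * z ^ n)"

lemma hz_simps[simp]: "hz z (enat n) = ennreal (z ^ n)" "hz z \<infinity> = 0"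
  by (auto simp: hz_def)

lemma hz_zero[simp]: "hz z 0 = 1"
  by (simp add: zero_enat_def)

lemma hz_add: "0 \<le> z \<Longrightarrow> hz z (a + b) = hz z a * hz z b"
  by (cases a; cases b) (auto simp: power_add ennreal_mult)

lemma summable_coef_pow:
  fixes c :: "nat \<Rightarrow> real"
  assumes "\<And>n. 0 \<le> c n" "summable c" "0 \<le> z" "z \<le> 1"
  shows "summable (\<lambda>n. c n * z ^ n)"
  by (rule summable_comparison_test[OF _ assms(2)])
     (auto intro!: exI[of _ 0] mult_left_le simp: assms power_le_one)

lemma pgfR_summable: "0 \<le> z \<Longrightarrow> z \<le> 1 \<Longrightarrow> summable (\<lambda>n. pmf p (enat n) * z ^ n)"
  by (rule summable_coef_pow) (auto simp: pmf_enat_summable)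

lemma pgfR_nonneg: "0 \<le> z \<Longrightarrow> z \<le> 1 \<Longrightarrow> 0 \<le> pgfR p z"
  unfolding pgfR_def by (intro suminf_nonneg pgfR_summable) auto

lemma pgfR_le1: "0 \<le> z \<Longrightarrow> z \<le> 1 \<Longrightarrow> pgfR p z \<le> 1"
proof -
  assume z: "0 \<le> z" "z \<le> 1"
  have "pgfR p z \<le> (\<Sum>n. pmf p (enat n))"
    unfolding pgfR_def
    by (intro suminf_le pgfR_summable z pmf_enat_summable)
       (auto intro!: mult_left_le simp: z power_le_one)
  also have "\<dots> \<le> 1" by (rule pmf_enat_sum_le)
  finally show ?thesis .
qed

lemma nn_hz: "0 \<le> z \<Longrightarrow> z \<le> 1 \<Longrightarrow> (\<integral>\<^sup>+x. hz z x \<partial>measure_pmf p) = ennreal (pgfR p z)"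
proof -
  assume z: "0 \<le> z" "z \<le> 1"
  have "(\<integral>\<^sup>+x. hz z x \<partial>measure_pmf p) = (\<Sum>n. ennreal (pmf p (enat n) * z ^ n))"
    by (simp add: nn_pmf_enat ennreal_mult z)
  also have "\<dots> = ennreal (pgfR p z)"
    unfolding pgfR_def
    by (rule suminf_ennreal_eq) (auto simp: z summable_sums pgfR_summable)
  finally show ?thesis .
qed

lemma nn_hz_conv: "0 \<le> z \<Longrightarrow>
  (\<integral>\<^sup>+x. hz z x \<partial>measure_pmf (conv_pmf p q)) = (\<integral>\<^sup>+x. hz z x \<partial>measure_pmf p) * (\<integral>\<^sup>+x. hz z x \<partial>measure_pmf q)"
  by (simp add: conv_pmf_def nn_integral_pair_pmf' hz_add nn_integral_cmult nn_integral_multc)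

lemma pgfR_conv: "0 \<le> z \<Longrightarrow> z \<le> 1 \<Longrightarrow> pgfR (conv_pmf p q) z = pgfR p z * pgfR q z"
  using nn_hz_conv[of z p q] by (simp add: nn_hz ennreal_mult'[symmetric] pgfR_nonneg)

lemma pgfR_return: "0 \<le> z \<Longrightarrow> z \<le> 1 \<Longrightarrow> pgfR (return_pmf x) z = enn2real (hz z x)"
  using nn_hz[of z "return_pmf x"] by (simp add: nn_integral_return pgfR_nonneg)



lemma tail_bound:
  fixes c :: "nat \<Rightarrow> real"
  assumes c: "\<And>n. 0 \<le> c n" "summable c" "suminf c \<le> 1" and z: "0 \<le> z" "z \<le> 1"
  shows "c n * z^n \<le> (\<Sum>j. c j * z^j) - (\<Sum>j<n. c j * z^j)"
    and "(\<Sum>j. c j * z^j) - (\<Sum>j<n. c j * z^j) \<le> c n * z^n + z^(Suc n)"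
proof -
  have sm: "summable (\<lambda>j. c j * z^j)" by (rule summable_coef_pow) (use c z in auto)
  have e1: "(\<Sum>j. c j * z^j) = (\<Sum>j. c (j + Suc n) * z^(j + Suc n)) + (\<Sum>j<Suc n. c j * z^j)"
    by (rule suminf_split_initial_segment[OF sm])
  define T where "T = (\<Sum>j. c (j + Suc n) * z^(j + Suc n))"
  have R: "(\<Sum>j. c j * z^j) - (\<Sum>j<n. c j * z^j) = c n * z^n + T"
    using e1 unfolding T_def by simp
  have smT: "summable (\<lambda>j. c (j + Suc n) * z^(j + Suc n))"
    using sm by (rule summable_ignore_initial_segment)
  have T0: "0 \<le> T" unfolding T_def by (intro suminf_nonneg smT) (auto simp: c z)
  have smc: "summable (\<lambda>j. c (j + Suc n))" using c(2) by (rule summable_ignore_initial_segment)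
  have "T \<le> (\<Sum>j. c (j + Suc n) * z^(Suc n))"
    unfolding T_def
  proof (rule suminf_le[OF _ smT])
    show "summable (\<lambda>j. c (j + Suc n) * z ^ Suc n)" using smc by (rule summable_mult2)
    fix j
    have "z^(j + Suc n) \<le> z^(Suc n)" using z by (intro power_decreasing) auto
    thus "c (j + Suc n) * z ^ (j + Suc n) \<le> c (j + Suc n) * z ^ Suc n"
      by (intro mult_left_mono) (auto simp: c)
  qed
  also have "\<dots> = (\<Sum>j. c (j + Suc n)) * z^(Suc n)"
    using smc by (rule suminf_mult2[symmetric])
  finally have T1: "T \<le> (\<Sum>j. c (j + Suc n)) * z^(Suc n)" .
  have S1: "(\<Sum>j. c (j + Suc n)) \<le> 1"
  proof -
    have "suminf c = (\<Sum>j. c (j + Suc n)) + (\<Sum>j<Suc n. c j)"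
      by (rule suminf_split_initial_segment[OF c(2)])
    moreover have "0 \<le> (\<Sum>j<Suc n. c j)" by (intro sum_nonneg) (auto simp: c)
    ultimately show ?thesis using c(3) by linarith
  qed
  have S0: "0 \<le> (\<Sum>j. c (j + Suc n))" by (intro suminf_nonneg smc) (simp add: c)
  have "(\<Sum>j. c (j + Suc n)) * z^(Suc n) \<le> z^(Suc n)"
    using z S0 S1 by (intro mult_left_le_one_le) auto
  with T1 have "T \<le> z^(Suc n)" by linarith
  with R T0 show "c n * z^n \<le> (\<Sum>j. c j * z^j) - (\<Sum>j<n. c j * z^j)"
    and "(\<Sum>j. c j * z^j) - (\<Sum>j<n. c j * z^j) \<le> c n * z^n + z^(Suc n)" by linarith+
qed

lemma coef_conv:
  fixes c :: "'a \<Rightarrow> nat \<Rightarrow> real" and d :: "nat \<Rightarrow> real"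
  assumes c: "\<And>a n. 0 \<le> c a n" "\<And>a. summable (c a)" "\<And>a. suminf (c a) \<le> 1"
      and d: "\<And>n. 0 \<le> d n" "summable d" "suminf d \<le> 1"
      and lim: "\<And>z. 0 < z \<Longrightarrow> z < 1 \<Longrightarrow> ((\<lambda>a. \<Sum>n. c a n * z^n) \<longlongrightarrow> (\<Sum>n. d n * z^n)) Fl"
  shows "((\<lambda>a. c a n) \<longlongrightarrow> d n) Fl"
proof (induction n rule: less_induct)
  case (less n)
  define R where "R a z = (\<Sum>j. c a j * z^j) - (\<Sum>j<n. c a j * z^j)" for a z
  define Rd where "Rd z = (\<Sum>j. d j * z^j) - (\<Sum>j<n. d j * z^j)" for z
  have RR: "((\<lambda>a. R a z) \<longlongrightarrow> Rd z) Fl" if "0<z" "z<1" for z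
    unfolding R_def Rd_def
    by (intro tendsto_diff lim that tendsto_sum tendsto_mult tendsto_const less) auto
  show ?case
  proof (rule tendstoI)
    fix e :: real assume e: "e > 0"
    define z where "z = min (1/2) (e/4)"
    have z: "0 < z" "z < 1" "z \<le> e/4" using e by (auto simp: z_def)
    have zn: "z^n > 0" using z by simp
    have ev: "eventually (\<lambda>a. dist (R a z) (Rd z) < z^n * (e/2)) Fl"
      using RR[OF z(1,2)] zn e by (intro tendstoD) auto
    show "eventually (\<lambda>a. dist (c a n) (d n) < e) Fl"
    proof (rule eventually_mono[OF ev])
      fix a assume H: "dist (R a z) (Rd z) < z^n * (e/2)"
      have b1: "c a n * z^n \<le> R a z" "R a z \<le> c a n * z^n + z^n * z"
        unfolding R_def using tail_bound[of "c a" z n] c z by (auto simp: mult.commute)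
      have b2: "d n * z^n \<le> Rd z" "Rd z \<le> d n * z^n + z^n * z"
        unfolding Rd_def using tail_bound[of d z n] d z by (auto simp: mult.commute)
      have H': "\<bar>R a z - Rd z\<bar> < z^n * (e/2)" using H by (simp add: dist_real_def)
      have h: "R a z - Rd z < z^n * (e/2)" "Rd z - R a z < z^n * (e/2)"
        using H' by (simp_all only: abs_less_iff) linarith+
      have "c a n * z^n - d n * z^n < z^n * (e/2) + z^n * z" using b1 b2 h by linarith
      hence "(c a n - d n) * z^n < (e/2 + z) * z^n" by (simp add: algebra_simps)
      hence 1: "c a n - d n < e/2 + z" using zn by (simp add: mult_less_cancel_right)
      have "d n * z^n - c a n * z^n < z^n * (e/2) + z^n * z" using b1 b2 h by linarith
      hence "(d n - c a n) * z^n < (e/2 + z) * z^n" by (simp add: algebra_simps)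
      hence 2: "d n - c a n < e/2 + z" using zn by (simp add: mult_less_cancel_right)
      show "dist (c a n) (d n) < e" using 1 2 z by (simp add: dist_real_def abs_less_iff)
    qed
  qed
qed

lemma pmf_enat_eqI:
  assumes "\<And>z. 0 < z \<Longrightarrow> z < 1 \<Longrightarrow> pgfR p z = pgfR q z" shows "p = q"
proof -
  have "((\<lambda>_::nat. pmf p (enat n)) \<longlongrightarrow> pmf q (enat n)) sequentially" for n
  proof (rule coef_conv[where c="\<lambda>_ n. pmf p (enat n)" and d="\<lambda>n. pmf q (enat n)"])
    fix z :: real assume "0 < z" "z < 1"
    thus "((\<lambda>_. \<Sum>n. pmf p (enat n) * z ^ n) \<longlongrightarrow> (\<Sum>n. pmf q (enat n) * z ^ n)) sequentially"
      using assms[of z] unfolding pgfR_def by simp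
  qed (auto simp: pmf_enat_summable pmf_enat_sum_le)
  hence fin: "pmf p (enat n) = pmf q (enat n)" for n using LIMSEQ_const_iff by blast
  have inf: "pmf p \<infinity> = pmf q \<infinity>" using pmf_enat_sum[of p] pmf_enat_sum[of q] fin by simp
  show ?thesis
  proof (rule pmf_eqI)
    fix i show "pmf p i = pmf q i" by (cases i) (simp_all add: fin inf)
  qed
qed

primrec cpow :: "enat pmf \<Rightarrow> nat \<Rightarrow> enat pmf" where
  "cpow P 0 = return_pmf 0"
| "cpow P (Suc m) = conv_pmf P (cpow P m)"

lemma pgfR_cpow: "0 \<le> z \<Longrightarrow> z \<le> 1 \<Longrightarrow> pgfR (cpow P m) z = pgfR P z ^ m"
  by (induction m) (simp_all add: pgfR_conv pgfR_return)

lemma pgfR_branch: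
  assumes K0: "K 0 = return_pmf 0"
      and Kc: "\<And>m n. conv_pmf (K (enat m)) (K (enat n)) = K (enat (m+n))"
      and z: "0 \<le> z" "z \<le> 1"
  shows "pgfR (K (enat m)) z = pgfR (K 1) z ^ m"
proof (induction m)
  case 0 show ?case using K0 z by (simp add: zero_enat_def[symmetric] pgfR_return)
next
  case (Suc m)
  have "K (enat (Suc m)) = conv_pmf (K 1) (K (enat m))" using Kc[of 1 m] by (simp add: one_enat_def)
  then show ?case using Suc z by (simp add: pgfR_conv)
qed

lemma nn_branch:
  assumes K0: "K 0 = return_pmf 0"
      and Kc: "\<And>m n. conv_pmf (K (enat m)) (K (enat n)) = K (enat (m+n))"
      and Ki: "K \<infinity> = return_pmf \<infinity>"
      and z: "0 \<le> z" "z \<le> 1"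
  shows "(\<integral>\<^sup>+x. hz z x \<partial>measure_pmf (K y)) = hz (pgfR (K 1) z) y"
proof (cases y)
  case (enat m)
  have w: "0 \<le> pgfR (K 1) z" by (rule pgfR_nonneg[OF z])
  show ?thesis using enat z w by (simp add: nn_hz pgfR_branch[OF K0 Kc])
next
  case infinity then show ?thesis using Ki by (simp add: nn_integral_return)
qed

lemma pgfR_bind_branch:
  assumes K0: "K 0 = return_pmf 0"
      and Kc: "\<And>m n. conv_pmf (K (enat m)) (K (enat n)) = K (enat (m+n))"
      and Ki: "K \<infinity> = return_pmf \<infinity>"
      and z: "0 \<le> z" "z \<le> 1"
  shows "pgfR (bind_pmf p K) z = pgfR p (pgfR (K 1) z)"
proof -
  define w where "w = pgfR (K 1) z"
  have w: "0 \<le> w" "w \<le> 1" unfolding w_def using z by (auto intro: pgfR_nonneg pgfR_le1)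
  have "ennreal (pgfR (bind_pmf p K) z) = (\<integral>\<^sup>+x. \<integral>\<^sup>+y. hz z y \<partial>measure_pmf (K x) \<partial>measure_pmf p)"
    by (simp add: nn_hz[symmetric] z)
  also have "\<dots> = (\<integral>\<^sup>+x. hz w x \<partial>measure_pmf p)"
    unfolding w_def by (simp add: nn_branch[OF K0 Kc Ki z])
  also have "\<dots> = ennreal (pgfR p w)" by (rule nn_hz[OF w])
  finally show ?thesis unfolding w_def
    by (subst (asm) ennreal_inj) (auto intro!: pgfR_nonneg pgfR_le1 z w[unfolded w_def])
qed

lemma pgfR_eq1_imp:
  assumes "pgfR p w = 1" "0 \<le> w" "w < 1"
  shows "pmf p 0 = 1"
proof (rule ccontr)
  assume ne: "pmf p 0 \<noteq> 1"
  define c where "c n = pmf p (enat n)" for n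
  have c0: "c 0 < 1" using ne pmf_le_1[of p 0] unfolding c_def by (simp add: zero_enat_def)
  have cs: "summable c" "suminf c \<le> 1" "\<And>n. 0 \<le> c n"
    unfolding c_def by (auto simp: pmf_enat_summable pmf_enat_sum_le)
  have sm: "summable (\<lambda>j. c j * w^j)" by (rule summable_coef_pow) (use cs assms in auto)
  have e1: "pgfR p w = (\<Sum>j. c (j + 1) * w^(j + 1)) + c 0"
    unfolding pgfR_def c_def[symmetric] using suminf_split_initial_segment[OF sm, of 1] by simp
  have smc: "summable (\<lambda>j. c (j + 1))" using cs(1) by (rule summable_ignore_initial_segment)
  have "(\<Sum>j. c (j + 1) * w^(j + 1)) \<le> (\<Sum>j. c (j + 1) * w)"
  proof (rule suminf_le)
    show "summable (\<lambda>j. c (j + 1) * w ^ (j + 1))" using sm by (rule summable_ignore_initial_segment)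
    show "summable (\<lambda>j. c (j + 1) * w)" using smc by (rule summable_mult2)
    fix j
    have "w^(j + 1) = w * w^j" by simp
    also have "\<dots> \<le> w" using assms by (intro mult_right_le_one_le) (auto simp: power_le_one)
    finally have "w^(j + 1) \<le> w" .
    thus "c (j + 1) * w ^ (j + 1) \<le> c (j + 1) * w" by (intro mult_left_mono) (auto simp: cs)
  qed
  also have "\<dots> = (\<Sum>j. c (j + 1)) * w" using smc by (rule suminf_mult2[symmetric])
  also have "(\<Sum>j. c (j + 1)) = suminf c - c 0"
    using suminf_split_initial_segment[OF cs(1), of 1] by simp
  finally have "1 \<le> (suminf c - c 0) * w + c 0" using e1 assms(1) by simp
  moreover have "(suminf c - c 0) * w \<le> (1 - c 0) * w"
    using cs assms by (intro mult_right_mono) auto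
  moreover have "(1 - c 0) * w < 1 - c 0"
    using mult_strict_left_mono[of w 1 "1 - c 0"] c0 assms by simp
  ultimately show False by linarith
qed



definition subprob :: "(nat \<Rightarrow> real) \<Rightarrow> bool" where
  "subprob c \<longleftrightarrow> (\<forall>n. 0 \<le> c n) \<and> summable c \<and> suminf c \<le> 1"

definition pgfC :: "(nat \<Rightarrow> real) \<Rightarrow> complex \<Rightarrow> complex" where
  "pgfC c z = (\<Sum>n. complex_of_real (c n) * z ^ n)"

lemma subprob_pmf: "subprob (\<lambda>n. pmf (p::enat pmf) (enat n))"
  by (auto simp: subprob_def pmf_enat_summable pmf_enat_sum_le)

lemma subprobD: "subprob c \<Longrightarrow> 0 \<le> c n" "subprob c \<Longrightarrow> summable c" "subprob c \<Longrightarrow> suminf c \<le> 1"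
  by (auto simp: subprob_def)

lemma subprob_tail: assumes "subprob c"
  shows "0 \<le> (\<Sum>j. c (j + N))" "(\<Sum>j. c (j + N)) \<le> 1" "summable (\<lambda>j. c (j + N))"
proof -
  note c = subprobD[OF assms]
  show smc: "summable (\<lambda>j. c (j + N))" using c(2) by (rule summable_ignore_initial_segment)
  show "0 \<le> (\<Sum>j. c (j + N))" by (intro suminf_nonneg smc) (simp add: c)
  have "suminf c = (\<Sum>j. c (j + N)) + (\<Sum>j<N. c j)"
    by (rule suminf_split_initial_segment[OF c(2)])
  moreover have "0 \<le> (\<Sum>j<N. c j)" by (intro sum_nonneg) (auto simp: c)
  ultimately show "(\<Sum>j. c (j + N)) \<le> 1" using c(3) by linarith
qed

lemma pgfC_summable_norm:
  assumes "subprob c" "norm z \<le> 1"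
  shows "summable (\<lambda>n. norm (complex_of_real (c n) * z ^ n))"
proof (rule summable_comparison_test[OF _ subprobD(2)[OF assms(1)]])
  show "\<exists>N. \<forall>n\<ge>N. norm (norm (complex_of_real (c n) * z ^ n)) \<le> c n"
    using assms by (auto intro!: exI[of _ 0] mult_left_le simp: norm_mult norm_power subprobD power_le_one)
qed

lemma pgfC_summable: "subprob c \<Longrightarrow> norm z \<le> 1 \<Longrightarrow> summable (\<lambda>n. complex_of_real (c n) * z ^ n)"
  by (rule summable_norm_cancel[OF pgfC_summable_norm])

lemma pgfC_holo: assumes "subprob c" shows "pgfC c holomorphic_on ball 0 1"
proof (rule power_series_holomorphic[where a="\<lambda>n. complex_of_real (c n)"])
  fix w :: complex assume "w \<in> ball 0 1"
  hence "norm w \<le> 1" by simp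
  thus "(\<lambda>n. complex_of_real (c n) * (w - 0) ^ n) sums pgfC c w"
    unfolding pgfC_def using pgfC_summable[OF assms] by (simp add: summable_sums)
qed

lemma pgfC_real:
  assumes "subprob c" "0 \<le> x" "x \<le> 1"
  shows "pgfC c (complex_of_real x) = complex_of_real (\<Sum>n. c n * x ^ n)"
proof -
  have "summable (\<lambda>n. c n * x ^ n)" by (rule summable_coef_pow) (use assms in \<open>auto simp: subprobD\<close>)
  hence "(\<lambda>n. complex_of_real (c n * x ^ n)) sums complex_of_real (\<Sum>n. c n * x ^ n)"
    by (simp only: sums_of_real_iff summable_sums)
  hence "(\<lambda>n. complex_of_real (c n) * complex_of_real x ^ n) sums complex_of_real (\<Sum>n. c n * x ^ n)"
    by simp
  thus ?thesis unfolding pgfC_def by (simp add: sums_iff)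
qed

lemma pgfC_pmf_real: "0 \<le> x \<Longrightarrow> x \<le> 1 \<Longrightarrow>
   pgfC (\<lambda>n. pmf p (enat n)) (complex_of_real x) = complex_of_real (pgfR p x)"
  unfolding pgfR_def by (rule pgfC_real[OF subprob_pmf])

lemma real_bound:
  assumes "subprob c" "0 \<le> w" "w < 1" "c 0 < 1"
  shows "(\<Sum>n. c n * w ^ n) < 1"
proof -
  note cs = subprobD[OF assms(1)]
  have sm: "summable (\<lambda>j. c j * w^j)" by (rule summable_coef_pow) (use cs assms in auto)
  have e1: "(\<Sum>n. c n * w ^ n) = (\<Sum>j. c (j + 1) * w^(j + 1)) + c 0"
    using suminf_split_initial_segment[OF sm, of 1] by simp
  have smc: "summable (\<lambda>j. c (j + 1))" using cs(2) by (rule summable_ignore_initial_segment)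
  have "(\<Sum>j. c (j + 1) * w^(j + 1)) \<le> (\<Sum>j. c (j + 1) * w)"
  proof (rule suminf_le)
    show "summable (\<lambda>j. c (j + 1) * w ^ (j + 1))" using sm by (rule summable_ignore_initial_segment)
    show "summable (\<lambda>j. c (j + 1) * w)" using smc by (rule summable_mult2)
    fix j
    have "w^(j + 1) = w * w^j" by simp
    also have "\<dots> \<le> w" using assms by (intro mult_right_le_one_le) (auto simp: power_le_one)
    finally have "w^(j + 1) \<le> w" .
    thus "c (j + 1) * w ^ (j + 1) \<le> c (j + 1) * w" by (intro mult_left_mono) (auto simp: cs)
  qed
  also have "\<dots> = (\<Sum>j. c (j + 1)) * w" using smc by (rule suminf_mult2[symmetric])
  also have "(\<Sum>j. c (j + 1)) = suminf c - c 0"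
    using suminf_split_initial_segment[OF cs(2), of 1] by simp
  finally have "(\<Sum>n. c n * w ^ n) \<le> (suminf c - c 0) * w + c 0" using e1 by simp
  moreover have "(suminf c - c 0) * w \<le> (1 - c 0) * w"
    using cs assms by (intro mult_right_mono) auto
  moreover have "(1 - c 0) * w < 1 - c 0"
    using mult_strict_left_mono[of w 1 "1 - c 0"] assms by simp
  ultimately show ?thesis by linarith
qed

lemma pgfC_norm_less1:
  assumes "subprob c" "norm z < 1" "c 0 < 1"
  shows "norm (pgfC c z) < 1"
proof -
  have "norm (pgfC c z) \<le> (\<Sum>n. norm (complex_of_real (c n) * z ^ n))"
    unfolding pgfC_def by (rule summable_norm[OF pgfC_summable_norm]) (use assms in auto)
  also have "\<dots> = (\<Sum>n. c n * norm z ^ n)"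
    using assms by (simp add: norm_mult norm_power subprobD)
  also have "\<dots> < 1" by (rule real_bound) (use assms in auto)
  finally show ?thesis .
qed

lemma subprob_c0_1:
  assumes "subprob c" "c 0 = 1"
  shows "pgfC c z = 1"
proof -
  note cs = subprobD[OF assms(1)]
  have cn: "c n = 0" if "n \<noteq> 0" for n
  proof -
    have "sum c {0, n} \<le> suminf c" by (rule sum_le_suminf) (auto simp: cs)
    thus ?thesis using that assms cs(3) cs(1)[of n] by simp
  qed
  have "(\<lambda>n. complex_of_real (c n) * z ^ n) = (\<lambda>n. if n = 0 then 1 else 0)"
    using cn assms by (auto simp: fun_eq_iff)
  moreover have "(\<lambda>n::nat. if n = 0 then (1::complex) else 0) sums 1"
    using sums_single[of 0 "\<lambda>_. 1::complex"] by simp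
  ultimately show ?thesis unfolding pgfC_def by (simp add: sums_iff)
qed

lemma not_const1_c0:
  assumes "subprob c" "\<not> (\<forall>z\<in>ball 0 1. pgfC c z = 1)"
  shows "c 0 < 1"
proof -
  have "c 0 \<le> suminf c" using sum_le_suminf[of c "{0}"] subprobD[OF assms(1)] by auto
  hence "c 0 \<le> 1" using subprobD[OF assms(1)] by linarith
  moreover have "c 0 \<noteq> 1" using subprob_c0_1[OF assms(1)] assms(2) by blast
  ultimately show ?thesis by linarith
qed

lemma pgfC_tail:
  assumes "subprob c" "norm z \<le> r" "r \<le> 1"
  shows "norm (pgfC c z - (\<Sum>n<N. complex_of_real (c n) * z ^ n)) \<le> r ^ N"
proof -
  note cs = subprobD[OF assms(1)]
  have z1: "norm z \<le> 1" using assms by linarith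
  have sm: "summable (\<lambda>n. complex_of_real (c n) * z ^ n)" by (rule pgfC_summable[OF assms(1) z1])
  have e: "pgfC c z - (\<Sum>n<N. complex_of_real (c n) * z ^ n) = (\<Sum>j. complex_of_real (c (j + N)) * z ^ (j + N))"
    unfolding pgfC_def using suminf_split_initial_segment[OF sm, of N] by simp
  have smn: "summable (\<lambda>j. norm (complex_of_real (c (j + N)) * z ^ (j + N)))"
    using pgfC_summable_norm[OF assms(1) z1] by (rule summable_ignore_initial_segment)
  have "norm (\<Sum>j. complex_of_real (c (j + N)) * z ^ (j + N)) \<le> (\<Sum>j. norm (complex_of_real (c (j + N)) * z ^ (j + N)))"
    by (rule summable_norm[OF smn])
  also have "\<dots> \<le> (\<Sum>j. c (j + N) * r ^ N)"
  proof (rule suminf_le[OF _ smn])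
    show "summable (\<lambda>j. c (j + N) * r ^ N)" by (rule summable_mult2) (rule subprob_tail[OF assms(1)])
    fix j
    have r0: "0 \<le> r" using assms norm_ge_zero[of z] by linarith
    have "norm z ^ (j + N) \<le> r ^ (j + N)" by (intro power_mono) (use assms in auto)
    also have "r ^ (j + N) \<le> r ^ N" using assms r0 by (intro power_decreasing) auto
    finally have "norm z ^ (j + N) \<le> r ^ N" .
    thus "norm (complex_of_real (c (j + N)) * z ^ (j + N)) \<le> c (j + N) * r ^ N"
      by (simp add: norm_mult norm_power cs abs_of_nonneg mult_left_mono)
  qed
  also have "\<dots> = (\<Sum>j. c (j + N)) * r ^ N"
    by (rule suminf_mult2[symmetric]) (rule subprob_tail[OF assms(1)])
  also have "\<dots> \<le> r ^ N"
  proof -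
    have "0 \<le> r" using assms norm_ge_zero[of z] by linarith
    thus ?thesis using subprob_tail[OF assms(1), of N] by (intro mult_left_le_one_le) auto
  qed
  finally show ?thesis using e by simp
qed

lemma unif_pgfC:
  assumes c: "\<And>a. subprob (c a)" and d: "subprob d"
      and lim: "\<And>n. ((\<lambda>a. c a n) \<longlongrightarrow> d n) Fl"
      and K: "K \<subseteq> cball 0 r" "0 \<le> r" "r < 1"
  shows "uniform_limit K (\<lambda>a. pgfC (c a)) (pgfC d) Fl"
proof (rule uniform_limitI)
  fix e :: real assume e: "e > 0"
  have "eventually (\<lambda>n. r ^ n < e/4) sequentially"
    using LIMSEQ_power_zero[of r] K e by (intro order_tendstoD) auto
  then obtain N where N: "r ^ N < e/4" by (auto simp: eventually_sequentially)
  define D where "D a = (\<Sum>n<N. \<bar>c a n - d n\<bar>)" for a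
  have "((\<lambda>a. D a) \<longlongrightarrow> (\<Sum>n<N. \<bar>d n - d n\<bar>)) Fl"
    unfolding D_def by (intro tendsto_sum tendsto_rabs tendsto_diff lim tendsto_const)
  hence "((\<lambda>a. D a) \<longlongrightarrow> 0) Fl" by simp
  hence ev: "eventually (\<lambda>a. D a < e/4) Fl" using e by (intro order_tendstoD) auto
  show "\<forall>\<^sub>F a in Fl. \<forall>z\<in>K. dist (pgfC (c a) z) (pgfC d z) < e"
  proof (rule eventually_mono[OF ev], intro ballI)
    fix a z assume Da: "D a < e/4" and z: "z \<in> K"
    have nz: "norm z \<le> r" using z K by auto
    define H where "H f = (\<Sum>n<N. complex_of_real (f n) * z ^ n)" for f
    have t1: "norm (pgfC (c a) z - H (c a)) \<le> r ^ N" unfolding H_def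
      by (rule pgfC_tail[OF c nz]) (use K in auto)
    have t2: "norm (pgfC d z - H d) \<le> r ^ N" unfolding H_def
      by (rule pgfC_tail[OF d nz]) (use K in auto)
    have "norm (H (c a) - H d) = norm (\<Sum>n<N. complex_of_real (c a n - d n) * z ^ n)"
      unfolding H_def by (simp add: sum_subtractf[symmetric] algebra_simps)
    also have "\<dots> \<le> (\<Sum>n<N. norm (complex_of_real (c a n - d n) * z ^ n))"
      by (rule norm_sum)
    also have "\<dots> \<le> D a" unfolding D_def
    proof (rule sum_mono)
      fix n
      have "norm z ^ n \<le> 1" using nz K by (intro power_le_one) auto
      thus "norm (complex_of_real (c a n - d n) * z ^ n) \<le> \<bar>c a n - d n\<bar>"
        by (simp add: norm_mult norm_power mult_left_le flip: of_real_diff)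
    qed
    finally have h: "norm (H (c a) - H d) \<le> D a" .
    have "dist (pgfC (c a) z) (pgfC d z) = norm ((pgfC (c a) z - H (c a)) - (pgfC d z - H d) + (H (c a) - H d))"
      by (simp add: dist_norm algebra_simps)
    also have "\<dots> \<le> norm (pgfC (c a) z - H (c a)) + norm (pgfC d z - H d) + norm (H (c a) - H d)"
      by (rule order_trans[OF norm_triangle_ineq]) (simp add: norm_triangle_ineq4)
    also have "\<dots> < e" using t1 t2 h N Da e by linarith
    finally show "dist (pgfC (c a) z) (pgfC d z) < e" .
  qed
qed

lemma compact_in_disc:
  assumes "compact K" "K \<subseteq> ball (0::complex) 1"
  obtains r where "0 \<le> r" "r < 1" "K \<subseteq> cball 0 r"
proof (cases "K = {}")
  case True then show ?thesis using that[of 0] by auto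
next
  case False
  obtain x where x: "x \<in> K" "\<forall>y\<in>K. norm y \<le> norm x"
    using continuous_attains_sup[OF assms(1) False continuous_on_norm_id] by blast
  have "norm x < 1" using x(1) assms(2) by (auto simp: subset_eq)
  moreover have "K \<subseteq> cball 0 (norm x)" using x(2) by (auto simp: subset_eq)
  ultimately show ?thesis by (intro that[of "norm x"]) auto
qed



lemma Delta_iff[simp]: "(s, t) \<in> Delta \<longleftrightarrow> 0 \<le> s \<and> s \<le> t"
  by (simp add: Delta_def)

lemma gen_fun_pgfC: "gen_fun L s t = pgfC (\<lambda>n. pmf (L s t 1) (enat n))"
  by (simp add: fun_eq_iff gen_fun_def pgfC_def)

lemma bk_L1: "branching_kernels L \<Longrightarrow> 0 \<le> s \<Longrightarrow> L s s n = return_pmf n"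
  by (simp add: branching_kernels_def)

lemma bk_L2: "branching_kernels L \<Longrightarrow> 0 \<le> s \<Longrightarrow> s \<le> t \<Longrightarrow> t \<le> u \<Longrightarrow> L s u x = bind_pmf (L s t x) (L t u)"
  unfolding branching_kernels_def kernel_comp_def by (metis)

lemma bk_L3: "branching_kernels L \<Longrightarrow> continuous_on UNIV (f :: enat \<Rightarrow> real) \<Longrightarrow>
   continuous_on Delta (\<lambda>(s, t). measure_pmf.expectation (L s t (enat n)) f)"
  unfolding branching_kernels_def by blast

lemma bk_L4: assumes "branching_kernels L" "0 \<le> s" "s \<le> t"
  shows "conv_pmf (L s t (enat m)) (L s t (enat n)) = L s t (enat (m + n))"
proof -
  have "\<forall>(s, t)\<in>Delta. \<forall>m n::nat. conv_pmf (L s t (enat m)) (L s t (enat n)) = L s t (enat (m + n))"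
    using assms(1) unfolding branching_kernels_def by blast
  from bspec[OF this, of "(s, t)"] assms show ?thesis by simp
qed

lemma bk_L5: assumes "branching_kernels L" "0 \<le> s" "s \<le> t"
  shows "L s t 0 = return_pmf 0"
proof -
  have "\<forall>(s, t)\<in>Delta. L s t 0 = return_pmf 0"
    using assms(1) unfolding branching_kernels_def by blast
  from bspec[OF this, of "(s, t)"] assms show ?thesis by simp
qed

lemma bk_L6: assumes "branching_kernels L" "0 \<le> s" "s \<le> t"
  shows "L s t \<infinity> = return_pmf \<infinity>"
proof -
  have "\<forall>(s, t)\<in>Delta. L s t \<infinity> = return_pmf \<infinity>"
    using assms(1) unfolding branching_kernels_def by blast
  from bspec[OF this, of "(s, t)"] assms show ?thesis by simp
qed

lemma bk_comp_real:
  assumes L: "branching_kernels L" and "0 \<le> s" "s \<le> t" "t \<le> u" "0 \<le> z" "z \<le> 1"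
  shows "pgfR (L s u 1) z = pgfR (L s t 1) (pgfR (L t u 1) z)"
proof -
  have t0: "0 \<le> t" "t \<le> u" using assms by auto
  have "L s u 1 = bind_pmf (L s t 1) (L t u)" by (rule bk_L2[OF L]) (use assms in auto)
  moreover have "pgfR (bind_pmf (L s t 1) (L t u)) z = pgfR (L s t 1) (pgfR (L t u 1) z)"
    by (rule pgfR_bind_branch[OF bk_L5[OF L t0] bk_L4[OF L t0] bk_L6[OF L t0]]) (use assms in auto)
  ultimately show ?thesis by simp
qed

lemma indicator_enat_cont: "continuous_on UNIV (indicator {enat n} :: enat \<Rightarrow> real)"
proof -
  have "open ((indicator {enat n} :: enat \<Rightarrow> real) -` B)" for B
  proof -
    have e: "(indicator {enat n} :: enat \<Rightarrow> real) -` B =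
      (if (1::real) \<in> B then {enat n} else {}) \<union> (if (0::real) \<in> B then - {enat n} else {})"
      by (auto simp: indicator_def of_bool_def split: if_splits)
    have "open (- {enat n})" by (simp add: open_Compl)
    thus ?thesis unfolding e using open_enat[of n] by (intro open_Un) auto
  qed
  thus ?thesis by (simp add: continuous_on_open_vimage)
qed

lemma bk_coef_cont:
  assumes L: "branching_kernels L"
  shows "continuous_on Delta (\<lambda>(s, t). pmf (L s t 1) (enat n))"
proof -
  have "continuous_on Delta (\<lambda>(s, t). measure_pmf.expectation (L s t (enat 1)) (indicator {enat n} :: enat \<Rightarrow> real))"
    by (rule bk_L3[OF L indicator_enat_cont])
  thus ?thesis by (simp add: measure_pmf_single one_enat_def)
qed

lemma bk_unif:
  assumes L: "branching_kernels L" and st0: "st0 \<in> Delta" and K: "compact K" "K \<subseteq> ball 0 1"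
  shows "uniform_limit K (\<lambda>(s, t). gen_fun L s t) (gen_fun L (fst st0) (snd st0)) (at st0 within Delta)"
proof -
  obtain r where r: "0 \<le> r" "r < 1" "K \<subseteq> cball 0 r" using compact_in_disc[OF K] by blast
  define c where "c a = (\<lambda>n. pmf (L (fst a) (snd a) 1) (enat n))" for a
  have eq: "(\<lambda>(s, t). gen_fun L s t) = (\<lambda>a. pgfC (c a))"
    by (auto simp: fun_eq_iff gen_fun_pgfC c_def)
  have lim: "((\<lambda>a. c a n) \<longlongrightarrow> c st0 n) (at st0 within Delta)" for n
  proof -
    have "((\<lambda>(s, t). pmf (L s t 1) (enat n)) \<longlongrightarrow> (\<lambda>(s, t). pmf (L s t 1) (enat n)) st0) (at st0 within Delta)"
      using bk_coef_cont[OF L, of n] st0 by (simp add: continuous_on_def)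
    moreover have "(\<lambda>(s, t). pmf (L s t 1) (enat n)) = (\<lambda>a. c a n)" by (auto simp: fun_eq_iff c_def)
    ultimately show ?thesis by simp
  qed
  have "uniform_limit K (\<lambda>a. pgfC (c a)) (pgfC (c st0)) (at st0 within Delta)"
    by (rule unif_pgfC[OF _ _ lim r(3) r(1) r(2)]) (auto simp: c_def subprob_pmf)
  thus ?thesis unfolding eq by (simp add: c_def gen_fun_pgfC)
qed

lemma pmf0_pgfR: "pmf p 0 = 1 \<Longrightarrow> 0 \<le> x \<Longrightarrow> x \<le> 1 \<Longrightarrow> pgfR p x = 1"
proof -
  assume a: "pmf p 0 = 1" "0 \<le> x" "x \<le> 1"
  have "complex_of_real (pgfR p x) = pgfC (\<lambda>n. pmf p (enat n)) (complex_of_real x)"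
    using a by (simp add: pgfC_pmf_real)
  also have "\<dots> = 1" by (rule subprob_c0_1[OF subprob_pmf]) (use a in \<open>simp add: zero_enat_def\<close>)
  finally show ?thesis by simp
qed

lemma bk_g_cont:
  assumes L: "branching_kernels L"
  shows "continuous_on Delta (\<lambda>a. pgfR (L (fst a) (snd a) 1) (1/2))"
  unfolding continuous_on_def
proof
  fix st0 assume st0: "st0 \<in> Delta"
  have h: "pgfC (\<lambda>n. pmf p (enat n)) (1/2) = complex_of_real (pgfR p (1/2))" for p
    using pgfC_pmf_real[of "1/2" p] by simp
  have "uniform_limit {complex_of_real (1/2)} (\<lambda>(s, t). gen_fun L s t) (gen_fun L (fst st0) (snd st0)) (at st0 within Delta)"
    by (rule bk_unif[OF L st0]) auto
  hence "((\<lambda>a. gen_fun L (fst a) (snd a) (complex_of_real (1/2))) \<longlongrightarrow> gen_fun L (fst st0) (snd st0) (complex_of_real (1/2))) (at st0 within Delta)"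
    by (simp add: case_prod_beta')
  hence "((\<lambda>a. complex_of_real (pgfR (L (fst a) (snd a) 1) (1/2))) \<longlongrightarrow> complex_of_real (pgfR (L (fst st0) (snd st0) 1) (1/2))) (at st0 within Delta)"
    by (simp add: gen_fun_pgfC h)
  thus "((\<lambda>a. pgfR (L (fst a) (snd a) 1) (1/2)) \<longlongrightarrow> pgfR (L (fst st0) (snd st0) 1) (1/2)) (at st0 within Delta)"
    by (simp add: tendsto_of_real_iff)
qed

lemma bk_c0:
  assumes L: "branching_kernels L" and st: "0 \<le> s0" "s0 \<le> t0"
  shows "pmf (L s0 t0 1) 0 < 1"
proof (rule ccontr)
  assume "\<not> pmf (L s0 t0 1) 0 < 1"
  hence p1: "pmf (L s0 t0 1) 0 = 1" using pmf_le_1[of "L s0 t0 1" 0] by linarith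
  define g where "g a = pgfR (L (fst a) (snd a) 1) (1/2)" for a :: "real \<times> real"
  define D' where "D' = {a::real\<times>real. s0 \<le> fst a \<and> fst a \<le> snd a \<and> snd a \<le> t0}"
  define C where "C = D' \<inter> g -` {1}"
  have D'D: "D' \<subseteq> Delta" using st by (auto simp: D'_def Delta_def)
  have gc: "continuous_on D' g" unfolding g_def
    by (rule continuous_on_subset[OF bk_g_cont[OF L] D'D])
  have clD': "closed D'" unfolding D'_def
    by (intro closed_Collect_conj closed_Collect_le continuous_intros)
  have bD': "bounded D'"
  proof (rule bounded_subset[OF bounded_cbox[of "(s0, s0)" "(t0, t0)"]])
    show "D' \<subseteq> cbox (s0, s0) (t0, t0)" by (auto simp: D'_def cbox_Pair_eq)
  qed
  have cC: "compact C" unfolding C_def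
  proof -
    have "closed (D' \<inter> g -` {1})" using continuous_closed_preimage[OF gc clD', of "{1}"] by simp
    moreover have "bounded (D' \<inter> g -` {1})" using bD' by (rule bounded_subset) auto
    ultimately show "compact (D' \<inter> g -` {1})" by (simp add: compact_eq_bounded_closed)
  qed
  have "(s0, t0) \<in> C" using st p1 by (auto simp: C_def D'_def g_def pmf0_pgfR)
  hence Cne: "C \<noteq> {}" by auto
  obtain a1 where a1: "a1 \<in> C" "\<forall>y\<in>C. snd a1 - fst a1 \<le> snd y - fst y"
  proof -
    have "continuous_on C (\<lambda>a. snd a - fst a)" by (intro continuous_intros)
    from continuous_attains_inf[OF cC Cne this] show ?thesis using that by blast
  qed
  obtain s1 t1 where a1e: "a1 = (s1, t1)" by (cases a1)
  have s1t1: "s0 \<le> s1" "s1 \<le> t1" "t1 \<le> t0" "g (s1, t1) = 1" using a1(1) by (auto simp: C_def D'_def a1e)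
  have s10: "0 \<le> s1" using st s1t1 by linarith
  have "s1 \<noteq> t1"
  proof
    assume "s1 = t1"
    hence "g (s1, t1) = pgfR (return_pmf 1) (1/2)" using bk_L1[OF L s10] by (simp add: g_def)
    also have "\<dots> = enn2real (hz (1/2) (enat 1))"
      using pgfR_return[of "1/2" "enat 1"] by (simp only: one_enat_def)
    also have "hz (1/2) (enat 1) = ennreal (1/2)" by (simp only: hz_simps power_one_right)
    also have "enn2real (ennreal (1/2)) = 1/2" by (rule enn2real_ennreal) simp
    finally show False using s1t1 by simp
  qed
  hence lt: "s1 < t1" using s1t1 by linarith
  define r where "r = (s1 + t1) / 2"
  have r: "s1 < r" "r < t1" using lt by (auto simp: r_def)
  have n1: "g (s1, r) \<noteq> 1"
  proof
    assume "g (s1, r) = 1"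
    hence "(s1, r) \<in> C" using s1t1 r by (auto simp: C_def D'_def)
    with a1(2) have "t1 - s1 \<le> r - s1" by (auto simp: a1e)
    thus False using r by linarith
  qed
  have n2: "g (r, t1) \<noteq> 1"
  proof
    assume "g (r, t1) = 1"
    hence "(r, t1) \<in> C" using s1t1 r by (auto simp: C_def D'_def)
    with a1(2) have "t1 - s1 \<le> t1 - r" by (auto simp: a1e)
    thus False using r by linarith
  qed
  define w where "w = pgfR (L r t1 1) (1/2)"
  have w: "0 \<le> w" "w \<le> 1" unfolding w_def by (auto intro: pgfR_nonneg pgfR_le1)
  have "w \<noteq> 1" using n2 by (simp add: g_def w_def)
  hence w1: "w < 1" using w by linarith
  have "pgfR (L s1 r 1) w = g (s1, t1)"
    unfolding g_def w_def using bk_comp_real[OF L s10, of r t1 "1/2"] r by simp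
  hence "pgfR (L s1 r 1) w = 1" using s1t1 by simp
  hence "pmf (L s1 r 1) 0 = 1" using pgfR_eq1_imp w w1 by blast
  hence "g (s1, r) = 1" by (simp add: g_def pmf0_pgfR)
  with n1 show False by simp
qed



lemma half_islimpt: "(1/2::complex) islimpt (complex_of_real ` {0<..<1})"
proof (unfold islimpt_approachable, intro allI impI)
  fix e :: real assume e: "0 < e"
  define m where "m = min (e/2) (1/4)"
  have m: "0 < m" "m \<le> 1/4" "m < e" using e by (auto simp: m_def)
  have "complex_of_real (1/2 + m) \<in> complex_of_real ` {0<..<1}" by (rule imageI) (use m in auto)
  moreover have "complex_of_real (1/2 + m) \<noteq> 1/2"
  proof
    assume "complex_of_real (1/2 + m) = 1/2"
    hence "complex_of_real (1/2 + m) = complex_of_real (1/2)" by simp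
    hence "1/2 + m = 1/2" by (simp only: of_real_eq_iff)
    thus False using m by simp
  qed
  moreover have "dist (complex_of_real (1/2 + m)) (1/2) < e"
  proof -
    have "dist (complex_of_real (1/2 + m)) (1/2) = dist (complex_of_real (1/2 + m)) (complex_of_real (1/2))" by simp
    also have "\<dots> = dist (1/2 + m) (1/2::real)" by (rule dist_of_real)
    also have "\<dots> = m" using m by (simp add: dist_real_def)
    finally show ?thesis using m by simp
  qed
  ultimately show "\<exists>x'\<in>complex_of_real ` {0<..<1}. x' \<noteq> 1/2 \<and> dist x' (1/2) < e" by blast
qed

lemma bk_holo: "0 \<le> s \<Longrightarrow> s \<le> t \<Longrightarrow> gen_fun L s t holomorphic_on ball 0 1"
  by (simp add: gen_fun_pgfC pgfC_holo subprob_pmf)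

lemma bk_maps:
  assumes L: "branching_kernels L" and "0 \<le> s" "s \<le> t"
  shows "gen_fun L s t ` ball 0 1 \<subseteq> ball 0 1"
proof
  fix y assume "y \<in> gen_fun L s t ` ball 0 1"
  then obtain z where z: "z \<in> ball 0 1" "y = gen_fun L s t z" by auto
  have c0: "pmf (L s t 1) (enat 0) < 1" using bk_c0[OF L assms(2,3)] by (simp add: zero_enat_def)
  have "norm (pgfC (\<lambda>n. pmf (L s t 1) (enat n)) z) < 1"
    by (rule pgfC_norm_less1[OF subprob_pmf]) (use z c0 in auto)
  thus "y \<in> ball 0 1" using z by (simp add: gen_fun_pgfC)
qed

lemma pgfC_return1: "pgfC (\<lambda>n. pmf (return_pmf 1) (enat n)) z = z"
proof -
  have "(\<lambda>n. complex_of_real (pmf (return_pmf 1) (enat n)) * z ^ n) = (\<lambda>n. if n = 1 then z ^ n else 0)"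
    by (auto simp: fun_eq_iff indicator_def one_enat_def)
  moreover have "(\<lambda>n::nat. if n = 1 then z ^ n else 0) sums z"
    using sums_single[of 1 "\<lambda>n. z ^ n"] by simp
  ultimately show ?thesis unfolding pgfC_def by (simp add: sums_iff)
qed

lemma bk_comp_complex:
  assumes L: "branching_kernels L" and st: "0 \<le> s" "s \<le> t" "t \<le> u" and z: "z \<in> ball 0 1"
  shows "gen_fun L s u z = gen_fun L s t (gen_fun L t u z)"
proof -
  define f where "f w = gen_fun L s u w - gen_fun L s t (gen_fun L t u w)" for w
  have t0: "0 \<le> t" using st by linarith
  have s0: "0 \<le> s" "s \<le> u" using st by linarith+
  have "(gen_fun L s t \<circ> gen_fun L t u) holomorphic_on ball 0 1"
    by (rule holomorphic_on_compose_gen[OF bk_holo[OF t0 st(3)] bk_holo[OF st(1,2)] bk_maps[OF L t0 st(3)]])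
  hence h2: "(\<lambda>w. gen_fun L s t (gen_fun L t u w)) holomorphic_on ball 0 1" by (simp add: o_def)
  have holo: "f holomorphic_on ball 0 1"
    unfolding f_def by (intro holomorphic_on_diff bk_holo[OF s0] h2)
  have zero: "f w = 0" if w: "w \<in> complex_of_real ` {0<..<1}" for w
  proof -
    obtain x where x: "w = complex_of_real x" "0 < x" "x < 1" using w by auto
    define v where "v = pgfR (L t u 1) x"
    have v: "0 \<le> v" "v \<le> 1" using x by (auto simp: v_def intro: pgfR_nonneg pgfR_le1)
    have "gen_fun L t u w = complex_of_real v"
      using x by (simp add: gen_fun_pgfC pgfC_pmf_real v_def)
    hence "gen_fun L s t (gen_fun L t u w) = complex_of_real (pgfR (L s t 1) v)"
      using v by (simp add: gen_fun_pgfC pgfC_pmf_real)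
    moreover have "gen_fun L s u w = complex_of_real (pgfR (L s u 1) x)"
      using x by (simp add: gen_fun_pgfC pgfC_pmf_real)
    moreover have "pgfR (L s u 1) x = pgfR (L s t 1) v"
      unfolding v_def by (rule bk_comp_real[OF L st]) (use x in auto)
    ultimately show ?thesis by (simp add: f_def)
  qed
  have "f z = 0"
  proof (rule analytic_continuation[OF holo open_ball connected_ball _ _ half_islimpt zero z])
    show "complex_of_real ` {0<..<1} \<subseteq> ball 0 1" by auto
    show "1/2 \<in> ball (0::complex) 1" by simp
  qed
  thus ?thesis by (simp add: f_def)
qed

lemma part1:
  assumes L: "branching_kernels L"
  shows "top_rev_evol_family (gen_fun L) \<and> (\<forall>(s, t)\<in>Delta. in_PGF (gen_fun L s t))"
proof (intro conjI)
  show "top_rev_evol_family (gen_fun L)" unfolding top_rev_evol_family_def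
  proof (intro conjI)
    show "\<forall>(s, t)\<in>Delta. gen_fun L s t holomorphic_on unit_disc \<and> gen_fun L s t ` unit_disc \<subseteq> unit_disc"
      using bk_holo bk_maps[OF L] by (auto simp: Delta_def)
    show "\<forall>s z. 0 \<le> s \<and> z \<in> unit_disc \<longrightarrow> gen_fun L s s z = z"
      using bk_L1[OF L] by (auto simp: gen_fun_pgfC pgfC_return1 simp del: pmf_return)
    show "\<forall>s t u z. 0 \<le> s \<and> s \<le> t \<and> t \<le> u \<and> z \<in> unit_disc \<longrightarrow> gen_fun L s u z = gen_fun L s t (gen_fun L t u z)"
      using bk_comp_complex[OF L] by blast
    show "\<forall>st0\<in>Delta. \<forall>K. compact K \<and> K \<subseteq> unit_disc \<longrightarrow>
        uniform_limit K (\<lambda>(s, t). gen_fun L s t) (gen_fun L (fst st0) (snd st0)) (at st0 within Delta)"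
      using bk_unif[OF L] by blast
  qed
  show "\<forall>(s, t)\<in>Delta. in_PGF (gen_fun L s t)"
  proof (clarify)
    fix s t assume "(s, t) \<in> Delta"
    hence st: "0 \<le> s" "s \<le> t" by auto
    show "in_PGF (gen_fun L s t)" unfolding in_PGF_def
    proof (intro conjI)
      show "\<exists>p. (\<forall>n. 0 \<le> p n) \<and> summable p \<and> suminf p \<le> 1 \<and>
          (\<forall>z\<in>unit_disc. gen_fun L s t z = (\<Sum>n. complex_of_real (p n) * z ^ n))"
        by (intro exI[of _ "\<lambda>n. pmf (L s t 1) (enat n)"])
           (auto simp: gen_fun_def pmf_enat_summable pmf_enat_sum_le)
      have "(1/2::complex) \<in> ball 0 1" by simp
      hence "gen_fun L s t (1/2) \<in> ball 0 1" using bk_maps[OF L st] by blast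
      hence "gen_fun L s t (1/2) \<noteq> 1" by auto
      moreover have "(1/2::complex) \<in> unit_disc" by simp
      ultimately show "\<not> (\<forall>z\<in>unit_disc. gen_fun L s t z = 1)" by blast
    qed
  qed
qed



lemma expectation_enat_nonneg:
  fixes g :: "enat \<Rightarrow> real"
  assumes g: "\<And>x. 0 \<le> g x" "\<And>x. g x \<le> B"
  shows "measure_pmf.expectation p g = (\<Sum>n. pmf p (enat n) * g (enat n)) + pmf p \<infinity> * g \<infinity>"
proof -
  have sm: "summable (\<lambda>n. pmf p (enat n) * g (enat n))"
  proof (rule summable_comparison_test[OF _ summable_mult2[OF pmf_enat_summable[of p], of B]])
    show "\<exists>N. \<forall>n\<ge>N. norm (pmf p (enat n) * g (enat n)) \<le> pmf p (enat n) * B"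
      using g by (auto intro!: exI[of _ 0] mult_left_mono)
  qed
  have "(\<integral>\<^sup>+x. ennreal (g x) \<partial>measure_pmf p) = (\<Sum>n. ennreal (pmf p (enat n) * g (enat n))) + ennreal (pmf p \<infinity> * g \<infinity>)"
    by (simp add: nn_pmf_enat ennreal_mult g)
  also have "(\<Sum>n. ennreal (pmf p (enat n) * g (enat n))) = ennreal (\<Sum>n. pmf p (enat n) * g (enat n))"
    by (rule suminf_ennreal_eq) (auto simp: g summable_sums[OF sm])
  also have "ennreal (\<Sum>n. pmf p (enat n) * g (enat n)) + ennreal (pmf p \<infinity> * g \<infinity>) =
       ennreal ((\<Sum>n. pmf p (enat n) * g (enat n)) + pmf p \<infinity> * g \<infinity>)"
    by (rule ennreal_plus[symmetric]) (auto intro!: suminf_nonneg sm simp: g)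
  finally have e: "(\<integral>\<^sup>+x. ennreal (g x) \<partial>measure_pmf p) = ennreal ((\<Sum>n. pmf p (enat n) * g (enat n)) + pmf p \<infinity> * g \<infinity>)" .
  have "measure_pmf.expectation p g = enn2real (\<integral>\<^sup>+x. ennreal (g x) \<partial>measure_pmf p)"
    by (rule enn2real_nn_integral_eq_integral[symmetric]) (auto simp: g)
  also have "\<dots> = (\<Sum>n. pmf p (enat n) * g (enat n)) + pmf p \<infinity> * g \<infinity>"
    unfolding e by (rule enn2real_ennreal) (auto intro!: add_nonneg_nonneg suminf_nonneg sm simp: g)
  finally show ?thesis .
qed

lemma expectation_enat:
  fixes f :: "enat \<Rightarrow> real"
  assumes f: "\<And>x. \<bar>f x\<bar> \<le> B"
  shows "measure_pmf.expectation p f = f \<infinity> + (\<Sum>n. pmf p (enat n) * (f (enat n) - f \<infinity>))"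
proof -
  define g where "g x = f x + B" for x
  have g: "0 \<le> g x" "g x \<le> 2 * B" for x using f[of x] by (auto simp: g_def)
  have B0: "0 \<le> B" using f[of 0] by linarith
  have int: "integrable (measure_pmf p) g"
    by (rule measure_pmf.integrable_const_bound[where B="2*B"]) (use g in auto)
  have "measure_pmf.expectation p g = measure_pmf.expectation p f + B"
  proof -
    have "integrable (measure_pmf p) f"
      by (rule measure_pmf.integrable_const_bound[where B=B]) (use f in auto)
    hence "measure_pmf.expectation p (\<lambda>x. f x + B) = measure_pmf.expectation p f + measure_pmf.expectation p (\<lambda>_. B)"
      by (intro Bochner_Integration.integral_add) auto
    thus ?thesis by (simp add: g_def[abs_def])
  qed
  moreover have "measure_pmf.expectation p g = (\<Sum>n. pmf p (enat n) * g (enat n)) + pmf p \<infinity> * g \<infinity>"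
    by (rule expectation_enat_nonneg[OF g])
  moreover have sm1: "summable (\<lambda>n. pmf p (enat n) * (f (enat n) - f \<infinity>))"
  proof (rule summable_comparison_test[OF _ summable_mult2[OF pmf_enat_summable[of p], of "2*B"]])
    show "\<exists>N. \<forall>n\<ge>N. norm (pmf p (enat n) * (f (enat n) - f \<infinity>)) \<le> pmf p (enat n) * (2 * B)"
    proof (intro exI[of _ 0] allI impI)
      fix n
      have "\<bar>f (enat n) - f \<infinity>\<bar> \<le> 2 * B" using f[of "enat n"] f[of \<infinity>] by linarith
      thus "norm (pmf p (enat n) * (f (enat n) - f \<infinity>)) \<le> pmf p (enat n) * (2 * B)"
        by (simp add: abs_mult mult_left_mono)
    qed
  qed
  moreover have "(\<Sum>n. pmf p (enat n) * g (enat n)) = (\<Sum>n. pmf p (enat n) * (f (enat n) - f \<infinity>)) + (\<Sum>n. pmf p (enat n)) * (f \<infinity> + B)"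
  proof -
    have "(\<lambda>n. pmf p (enat n) * g (enat n)) = (\<lambda>n. pmf p (enat n) * (f (enat n) - f \<infinity>) + pmf p (enat n) * (f \<infinity> + B))"
      by (auto simp: fun_eq_iff g_def algebra_simps)
    moreover have "(\<Sum>n. pmf p (enat n) * (f (enat n) - f \<infinity>) + pmf p (enat n) * (f \<infinity> + B)) =
       (\<Sum>n. pmf p (enat n) * (f (enat n) - f \<infinity>)) + (\<Sum>n. pmf p (enat n) * (f \<infinity> + B))"
      by (rule suminf_add[symmetric, OF sm1 summable_mult2[OF pmf_enat_summable]])
    moreover have "(\<Sum>n. pmf p (enat n) * (f \<infinity> + B)) = (\<Sum>n. pmf p (enat n)) * (f \<infinity> + B)"
      by (rule suminf_mult2[symmetric, OF pmf_enat_summable])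
    ultimately show ?thesis by simp
  qed
  moreover have "(\<Sum>n. pmf p (enat n)) = 1 - pmf p \<infinity>" using pmf_enat_sum[of p] by linarith
  ultimately show ?thesis by (simp add: g_def algebra_simps)
qed

lemma sum_weak:
  fixes h :: "nat \<Rightarrow> real"
  assumes c: "\<And>a. subprob (c a)" and d: "subprob d" and lim: "\<And>n. ((\<lambda>a. c a n) \<longlongrightarrow> d n) Fl"
    and h: "h \<longlonglongrightarrow> 0"
  shows "((\<lambda>a. \<Sum>n. c a n * h n) \<longlongrightarrow> (\<Sum>n. d n * h n)) Fl"
proof (rule tendstoI)
  fix e :: real assume e: "e > 0"
  obtain M where M: "0 < M" "\<And>n. \<bar>h n\<bar> \<le> M"
    using convergent_imp_Bseq[OF convergentI[OF h]] by (auto elim!: BseqE)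
  have "eventually (\<lambda>n. dist (h n) 0 < e/4) sequentially" using h e by (intro tendstoD) auto
  then obtain N where N: "\<And>n. n \<ge> N \<Longrightarrow> \<bar>h n\<bar> < e/4" by (auto simp: eventually_sequentially)
  have tail: "\<bar>(\<Sum>n. b n * h n) - (\<Sum>n<N. b n * h n)\<bar> \<le> e/4" and smb: "summable (\<lambda>n. b n * h n)"
    if b: "subprob b" for b
  proof -
    note bs = subprobD[OF b]
    show smb: "summable (\<lambda>n. b n * h n)"
    proof (rule summable_comparison_test[OF _ summable_mult2[OF bs(2), of M]])
      show "\<exists>N. \<forall>n\<ge>N. norm (b n * h n) \<le> b n * M"
        using M bs by (auto intro!: exI[of _ 0] mult_left_mono simp: abs_mult)
    qed
    have e1: "(\<Sum>n. b n * h n) - (\<Sum>n<N. b n * h n) = (\<Sum>j. b (j + N) * h (j + N))"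
      using suminf_split_initial_segment[OF smb, of N] by simp
    have sma: "summable (\<lambda>j. \<bar>b (j + N) * h (j + N)\<bar>)"
    proof (rule summable_comparison_test[OF _ summable_mult2[OF subprob_tail(3)[OF b, of N], of M]])
      show "\<exists>N'. \<forall>n\<ge>N'. norm \<bar>b (n + N) * h (n + N)\<bar> \<le> b (n + N) * M"
        using M bs by (auto intro!: exI[of _ 0] mult_left_mono simp: abs_mult)
    qed
    have "\<bar>\<Sum>j. b (j + N) * h (j + N)\<bar> \<le> (\<Sum>j. \<bar>b (j + N) * h (j + N)\<bar>)" by (rule summable_rabs[OF sma])
    also have "\<dots> \<le> (\<Sum>j. b (j + N) * (e/4))"
    proof (rule suminf_le[OF _ sma])
      show "summable (\<lambda>j. b (j + N) * (e / 4))" by (rule summable_mult2) (rule subprob_tail[OF b])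
      fix j
      have "\<bar>h (j + N)\<bar> \<le> e/4" using N[of "j + N"] by simp
      hence "b (j + N) * \<bar>h (j + N)\<bar> \<le> b (j + N) * (e / 4)"
        by (rule mult_left_mono) (simp add: bs)
      thus "\<bar>b (j + N) * h (j + N)\<bar> \<le> b (j + N) * (e / 4)"
        by (simp add: abs_mult bs abs_of_nonneg)
    qed
    also have "\<dots> = (\<Sum>j. b (j + N)) * (e/4)" by (rule suminf_mult2[symmetric]) (rule subprob_tail[OF b])
    also have "\<dots> \<le> e/4" using subprob_tail[OF b, of N] e by (intro mult_left_le_one_le) auto
    finally show "\<bar>(\<Sum>n. b n * h n) - (\<Sum>n<N. b n * h n)\<bar> \<le> e/4" using e1 by simp
  qed
  have "((\<lambda>a. \<Sum>n<N. c a n * h n) \<longlongrightarrow> (\<Sum>n<N. d n * h n)) Fl"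
    by (intro tendsto_sum tendsto_mult lim tendsto_const)
  hence ev: "eventually (\<lambda>a. dist (\<Sum>n<N. c a n * h n) (\<Sum>n<N. d n * h n) < e/4) Fl"
    using e by (intro tendstoD) auto
  show "eventually (\<lambda>a. dist (\<Sum>n. c a n * h n) (\<Sum>n. d n * h n) < e) Fl"
  proof (rule eventually_mono[OF ev])
    fix a assume H: "dist (\<Sum>n<N. c a n * h n) (\<Sum>n<N. d n * h n) < e/4"
    have t1: "\<bar>(\<Sum>n. c a n * h n) - (\<Sum>n<N. c a n * h n)\<bar> \<le> e/4" by (rule tail[OF c])
    have t2: "\<bar>(\<Sum>n. d n * h n) - (\<Sum>n<N. d n * h n)\<bar> \<le> e/4" by (rule tail[OF d])
    show "dist (\<Sum>n. c a n * h n) (\<Sum>n. d n * h n) < e"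
      unfolding dist_real_def using t1 t2 H[unfolded dist_real_def] e
      by (simp only: abs_le_iff abs_less_iff) linarith
  qed
qed

lemma enat_tendsto_inf: "(\<lambda>n. enat n) \<longlonglongrightarrow> \<infinity>"
proof (rule order_tendstoI)
  fix y :: enat assume "y < \<infinity>"
  then obtain k where k: "y = enat k" by (cases y) auto
  show "eventually (\<lambda>n. y < enat n) sequentially"
    unfolding k eventually_sequentially by (intro exI[of _ "Suc k"]) auto
next
  fix y :: enat assume "\<infinity> < y" thus "eventually (\<lambda>n. enat n < y) sequentially" by simp
qed

lemma weak_conv:
  fixes q :: "'a \<Rightarrow> enat pmf" and f :: "enat \<Rightarrow> real"
  assumes f: "continuous_on UNIV f"
    and lim: "\<And>n. ((\<lambda>a. pmf (q a) (enat n)) \<longlongrightarrow> pmf q0 (enat n)) Fl"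
  shows "((\<lambda>a. measure_pmf.expectation (q a) f) \<longlongrightarrow> measure_pmf.expectation q0 f) Fl"
proof -
  have fl: "(\<lambda>n. f (enat n)) \<longlonglongrightarrow> f \<infinity>"
    by (rule continuous_on_tendsto_compose[OF f enat_tendsto_inf]) auto
  obtain K where K: "0 < K" "\<And>n. \<bar>f (enat n)\<bar> \<le> K"
    using convergent_imp_Bseq[OF convergentI[OF fl]] by (auto elim!: BseqE)
  define B where "B = K + \<bar>f \<infinity>\<bar>"
  have fB: "\<bar>f x\<bar> \<le> B" for x
  proof (cases x)
    case (enat m) thus ?thesis using K(2)[of m] abs_ge_zero[of "f \<infinity>"] unfolding B_def by simp
  next
    case infinity thus ?thesis using K(1) unfolding B_def by simp
  qed
  have h: "(\<lambda>n. f (enat n) - f \<infinity>) \<longlonglongrightarrow> 0"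
    using tendsto_diff[OF fl tendsto_const[of "f \<infinity>"]] by simp
  have "((\<lambda>a. \<Sum>n. pmf (q a) (enat n) * (f (enat n) - f \<infinity>)) \<longlongrightarrow> (\<Sum>n. pmf q0 (enat n) * (f (enat n) - f \<infinity>))) Fl"
    by (rule sum_weak[OF subprob_pmf subprob_pmf lim h])
  hence "((\<lambda>a. f \<infinity> + (\<Sum>n. pmf (q a) (enat n) * (f (enat n) - f \<infinity>))) \<longlongrightarrow> f \<infinity> + (\<Sum>n. pmf q0 (enat n) * (f (enat n) - f \<infinity>))) Fl"
    by (intro tendsto_add tendsto_const)
  thus ?thesis by (simp add: expectation_enat[OF fB])
qed



definition mkpmf :: "(nat \<Rightarrow> real) \<Rightarrow> enat pmf" where
  "mkpmf c = embed_pmf (\<lambda>x. case x of enat n \<Rightarrow> c n | \<infinity> \<Rightarrow> 1 - suminf c)"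

lemma mkpmf_props:
  assumes "subprob c"
  shows "pmf (mkpmf c) (enat n) = c n" "pmf (mkpmf c) \<infinity> = 1 - suminf c"
proof -
  note cs = subprobD[OF assms]
  define f where "f = (\<lambda>x. case x of enat n \<Rightarrow> c n | \<infinity> \<Rightarrow> 1 - suminf c)"
  have nn: "0 \<le> f x" for x using cs by (cases x) (auto simp: f_def)
  have "(\<integral>\<^sup>+x. ennreal (f x) \<partial>count_space UNIV) = (\<Sum>n. ennreal (c n)) + ennreal (1 - suminf c)"
    by (simp add: nn_enat f_def)
  also have "(\<Sum>n. ennreal (c n)) = ennreal (suminf c)"
    by (rule suminf_ennreal_eq) (auto simp: cs summable_sums)
  also have "ennreal (suminf c) + ennreal (1 - suminf c) = ennreal (suminf c + (1 - suminf c))"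
    by (rule ennreal_plus[symmetric]) (auto intro: suminf_nonneg simp: cs)
  finally have one: "(\<integral>\<^sup>+x. ennreal (f x) \<partial>count_space UNIV) = 1" by simp
  have m: "mkpmf c = embed_pmf f" by (simp add: mkpmf_def f_def)
  have "pmf (mkpmf c) x = f x" for x unfolding m by (rule pmf_embed_pmf[OF nn one])
  thus "pmf (mkpmf c) (enat n) = c n" "pmf (mkpmf c) \<infinity> = 1 - suminf c" by (simp_all add: f_def)
qed

lemma pgfR_mkpmf: "subprob c \<Longrightarrow> pgfR (mkpmf c) x = (\<Sum>n. c n * x ^ n)"
  by (simp add: pgfR_def mkpmf_props)

lemma conv_cpow: "conv_pmf (cpow P m) (cpow P n) = cpow P (m + n)"
  by (rule pmf_enat_eqI) (simp add: pgfR_conv pgfR_cpow power_add)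

lemma cpow1: "cpow P 1 = P"
proof (rule pmf_enat_eqI)
  fix z :: real assume "0 < z" "z < 1"
  thus "pgfR (cpow P 1) z = pgfR P z" using pgfR_cpow[of z P 1] by simp
qed

lemma cpow1': "cpow P (Suc 0) = P"
  using cpow1[of P] by (simp only: One_nat_def)

lemma pgfR_return_enat: "0 \<le> x \<Longrightarrow> x \<le> 1 \<Longrightarrow> pgfR (return_pmf (enat m)) x = x ^ m"
proof -
  assume x: "0 \<le> x" "x \<le> 1"
  have "pgfR (return_pmf (enat m)) x = enn2real (hz x (enat m))" by (rule pgfR_return[OF x])
  also have "hz x (enat m) = ennreal (x ^ m)" by (rule hz_simps)
  also have "enn2real (ennreal (x ^ m)) = x ^ m" by (rule enn2real_ennreal) (use x in simp)
  finally show ?thesis .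
qed


context
  fixes F :: "real \<Rightarrow> real \<Rightarrow> complex \<Rightarrow> complex"
  assumes TF: "top_rev_evol_family F" and PG: "\<forall>(s, t)\<in>Delta. in_PGF (F s t)"
begin

lemma TF_parts:
  "\<forall>(s, t)\<in>Delta. F s t holomorphic_on unit_disc \<and> F s t ` unit_disc \<subseteq> unit_disc"
  "\<forall>s z. 0 \<le> s \<and> z \<in> unit_disc \<longrightarrow> F s s z = z"
  "\<forall>s t u z. 0 \<le> s \<and> s \<le> t \<and> t \<le> u \<and> z \<in> unit_disc \<longrightarrow> F s u z = F s t (F t u z)"
  "\<forall>st0\<in>Delta. \<forall>K. compact K \<and> K \<subseteq> unit_disc \<longrightarrow>
        uniform_limit K (\<lambda>(s, t). F s t) (F (fst st0) (snd st0)) (at st0 within Delta)"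
proof -
  have tf: "(\<forall>(s, t)\<in>Delta. F s t holomorphic_on unit_disc \<and> F s t ` unit_disc \<subseteq> unit_disc) \<and>
     (\<forall>s z. 0 \<le> s \<and> z \<in> unit_disc \<longrightarrow> F s s z = z) \<and>
     (\<forall>s t u z. 0 \<le> s \<and> s \<le> t \<and> t \<le> u \<and> z \<in> unit_disc \<longrightarrow> F s u z = F s t (F t u z)) \<and>
     (\<forall>st0\<in>Delta. \<forall>K. compact K \<and> K \<subseteq> unit_disc \<longrightarrow>
        uniform_limit K (\<lambda>(s, t). F s t) (F (fst st0) (snd st0)) (at st0 within Delta))"
    using TF unfolding top_rev_evol_family_def .
  show "\<forall>(s, t)\<in>Delta. F s t holomorphic_on unit_disc \<and> F s t ` unit_disc \<subseteq> unit_disc"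
    by (rule conjunct1[OF tf])
  show "\<forall>s z. 0 \<le> s \<and> z \<in> unit_disc \<longrightarrow> F s s z = z"
    by (rule conjunct1[OF conjunct2[OF tf]])
  show "\<forall>s t u z. 0 \<le> s \<and> s \<le> t \<and> t \<le> u \<and> z \<in> unit_disc \<longrightarrow> F s u z = F s t (F t u z)"
    by (rule conjunct1[OF conjunct2[OF conjunct2[OF tf]]])
  show "\<forall>st0\<in>Delta. \<forall>K. compact K \<and> K \<subseteq> unit_disc \<longrightarrow>
        uniform_limit K (\<lambda>(s, t). F s t) (F (fst st0) (snd st0)) (at st0 within Delta)"
    by (rule conjunct2[OF conjunct2[OF conjunct2[OF tf]]])
qed

lemma TF_maps: assumes "0 \<le> s" "s \<le> t" "z \<in> ball 0 1" shows "F s t z \<in> ball 0 1"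
proof -
  from bspec[OF TF_parts(1), of "(s, t)"] assms have "F s t ` unit_disc \<subseteq> unit_disc" by simp
  thus ?thesis using assms(3) by blast
qed

lemma TF_id: "0 \<le> s \<Longrightarrow> z \<in> ball 0 1 \<Longrightarrow> F s s z = z"
  using TF_parts(2) by blast

lemma TF_comp: "0 \<le> s \<Longrightarrow> s \<le> t \<Longrightarrow> t \<le> u \<Longrightarrow> z \<in> ball 0 1 \<Longrightarrow> F s u z = F s t (F t u z)"
  using TF_parts(3) by blast

lemma TF_unif: "st0 \<in> Delta \<Longrightarrow> compact K \<Longrightarrow> K \<subseteq> ball 0 1 \<Longrightarrow>
   uniform_limit K (\<lambda>(s, t). F s t) (F (fst st0) (snd st0)) (at st0 within Delta)"
  using TF_parts(4) by blast

definition coef :: "real \<Rightarrow> real \<Rightarrow> nat \<Rightarrow> real" where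
  "coef s t = (SOME p. (\<forall>n. 0 \<le> p n) \<and> summable p \<and> suminf p \<le> 1 \<and>
        (\<forall>z\<in>ball 0 1. F s t z = (\<Sum>n. complex_of_real (p n) * z ^ n)))"

lemma coef:
  assumes "0 \<le> s" "s \<le> t"
  shows "subprob (coef s t)" "\<And>z. z \<in> ball 0 1 \<Longrightarrow> F s t z = pgfC (coef s t) z"
proof -
  have "in_PGF (F s t)" using PG assms by auto
  hence ex: "\<exists>p. (\<forall>n. 0 \<le> p n) \<and> summable p \<and> suminf p \<le> 1 \<and>
        (\<forall>z\<in>ball 0 1. F s t z = (\<Sum>n. complex_of_real (p n) * z ^ n))"
    unfolding in_PGF_def by blast
  have "(\<forall>n. 0 \<le> coef s t n) \<and> summable (coef s t) \<and> suminf (coef s t) \<le> 1 \<and>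
        (\<forall>z\<in>ball 0 1. F s t z = (\<Sum>n. complex_of_real (coef s t n) * z ^ n))"
    unfolding coef_def by (rule someI_ex[OF ex])
  thus "subprob (coef s t)" "\<And>z. z \<in> ball 0 1 \<Longrightarrow> F s t z = pgfC (coef s t) z"
    by (auto simp: subprob_def pgfC_def)
qed

definition PP :: "real \<Rightarrow> real \<Rightarrow> enat pmf" where
  "PP s t = mkpmf (coef s t)"

lemma F_real:
  assumes "0 \<le> s" "s \<le> t" "0 \<le> x" "x < 1"
  shows "F s t (complex_of_real x) = complex_of_real (pgfR (PP s t) x)"
proof -
  have "complex_of_real x \<in> ball 0 1" using assms by simp
  hence "F s t (complex_of_real x) = pgfC (coef s t) (complex_of_real x)" using coef(2)[OF assms(1,2)] by blast
  also have "\<dots> = complex_of_real (\<Sum>n. coef s t n * x ^ n)"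
    by (rule pgfC_real[OF coef(1)[OF assms(1,2)]]) (use assms in auto)
  also have "(\<Sum>n. coef s t n * x ^ n) = pgfR (PP s t) x"
    unfolding PP_def by (rule pgfR_mkpmf[symmetric, OF coef(1)[OF assms(1,2)]])
  finally show ?thesis .
qed

definition LL :: "real \<Rightarrow> real \<Rightarrow> enat \<Rightarrow> enat pmf" where
  "LL s t x = (if 0 \<le> s \<and> s \<le> t then (case x of enat m \<Rightarrow> cpow (PP s t) m | \<infinity> \<Rightarrow> return_pmf \<infinity>) else return_pmf x)"

lemma LL_enat: "0 \<le> s \<Longrightarrow> s \<le> t \<Longrightarrow> LL s t (enat m) = cpow (PP s t) m"
  by (simp add: LL_def)

lemma LL_inf: "0 \<le> s \<Longrightarrow> s \<le> t \<Longrightarrow> LL s t \<infinity> = return_pmf \<infinity>"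
  by (simp add: LL_def)

lemma LL_0: "0 \<le> s \<Longrightarrow> s \<le> t \<Longrightarrow> LL s t 0 = return_pmf 0"
  by (simp add: LL_def zero_enat_def)

lemma LL_1: "0 \<le> s \<Longrightarrow> s \<le> t \<Longrightarrow> LL s t 1 = PP s t"
  by (simp add: LL_def one_enat_def cpow1 cpow1' del: cpow.simps)

lemma LL_conv: "0 \<le> s \<Longrightarrow> s \<le> t \<Longrightarrow> conv_pmf (LL s t (enat m)) (LL s t (enat n)) = LL s t (enat (m + n))"
  by (simp add: LL_enat conv_cpow del: cpow.simps)

lemma pgfR_LL: "0 \<le> s \<Longrightarrow> s \<le> t \<Longrightarrow> 0 \<le> x \<Longrightarrow> x \<le> 1 \<Longrightarrow> pgfR (LL s t (enat m)) x = pgfR (PP s t) x ^ m"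
  by (simp add: LL_enat pgfR_cpow del: cpow.simps)

lemma LL_L1: assumes "0 \<le> s" shows "LL s s x = return_pmf x"
proof (cases x)
  case (enat m)
  have "LL s s (enat m) = return_pmf (enat m)"
  proof (rule pmf_enat_eqI)
    fix z :: real assume z: "0 < z" "z < 1"
    have "complex_of_real (pgfR (PP s s) z) = F s s (complex_of_real z)"
      using F_real[OF assms order_refl, of z] z by simp
    also have "\<dots> = complex_of_real z" by (rule TF_id[OF assms]) (use z in simp)
    finally have "pgfR (PP s s) z = z" by simp
    thus "pgfR (LL s s (enat m)) z = pgfR (return_pmf (enat m)) z"
      using z assms by (simp add: pgfR_LL pgfR_return_enat)
  qed
  thus ?thesis using enat by simp
next
  case infinity thus ?thesis using assms by (simp add: LL_inf)
qed

lemma LL_L2: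
  assumes st: "0 \<le> s" "s \<le> t" "t \<le> u"
  shows "kernel_comp (LL s t) (LL t u) = LL s u"
proof
  fix x
  have t0: "0 \<le> t" "t \<le> u" and s0: "0 \<le> s" "s \<le> u" using st by linarith+
  show "kernel_comp (LL s t) (LL t u) x = LL s u x"
  proof (cases x)
    case infinity
    thus ?thesis using st t0 s0 by (simp add: kernel_comp_def LL_inf bind_return_pmf)
  next
    case (enat m)
    have "bind_pmf (LL s t (enat m)) (LL t u) = LL s u (enat m)"
    proof (rule pmf_enat_eqI)
      fix x :: real assume x: "0 < x" "x < 1"
      define w where "w = pgfR (PP t u) x"
      have w: "0 \<le> w" "w \<le> 1" unfolding w_def using x by (auto intro: pgfR_nonneg pgfR_le1)
      have wF: "complex_of_real w = F t u (complex_of_real x)" using F_real[OF t0, of x] x by (simp add: w_def)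
      have "F t u (complex_of_real x) \<in> ball 0 1" by (rule TF_maps[OF t0]) (use x in simp)
      hence "norm (complex_of_real w) < 1" using wF by simp
      hence w1: "w < 1" by (simp add: abs_less_iff)
      have "pgfR (bind_pmf (LL s t (enat m)) (LL t u)) x = pgfR (LL s t (enat m)) (pgfR (LL t u 1) x)"
        by (rule pgfR_bind_branch[OF LL_0[OF t0] LL_conv[OF t0] LL_inf[OF t0]]) (use x in auto)
      also have "\<dots> = pgfR (PP s t) w ^ m" using w st by (simp add: LL_1[OF t0] pgfR_LL w_def)
      also have "pgfR (PP s t) w = pgfR (PP s u) x"
      proof -
        have "complex_of_real (pgfR (PP s u) x) = F s u (complex_of_real x)"
          using F_real[OF s0, of x] x by simp
        also have "\<dots> = F s t (F t u (complex_of_real x))" by (rule TF_comp[OF st]) (use x in simp)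
        also have "F t u (complex_of_real x) = complex_of_real w" using F_real[OF t0, of x] x by (simp add: w_def)
        also have "F s t (complex_of_real w) = complex_of_real (pgfR (PP s t) w)"
          by (rule F_real[OF st(1,2) w(1) w1])
        finally show ?thesis by simp
      qed
      also have "pgfR (PP s u) x ^ m = pgfR (LL s u (enat m)) x" using x s0 by (simp add: pgfR_LL)
      finally show "pgfR (bind_pmf (LL s t (enat m)) (LL t u)) x = pgfR (LL s u (enat m)) x" .
    qed
    thus ?thesis using enat by (simp add: kernel_comp_def)
  qed
qed

lemma LL_cont:
  fixes f :: "enat \<Rightarrow> real" assumes f: "continuous_on UNIV f"
  shows "continuous_on Delta (\<lambda>(s, t). measure_pmf.expectation (LL s t (enat n)) f)"
  unfolding continuous_on_def
proof
  fix st0 assume st0: "st0 \<in> Delta"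
  obtain s0 t0 where e0: "st0 = (s0, t0)" by (cases st0)
  have st0': "0 \<le> s0" "s0 \<le> t0" using st0 e0 by auto
  define q where "q a = LL (fst a) (snd a) (enat n)" for a
  have evD: "eventually (\<lambda>a. a \<in> Delta) (at st0 within Delta)" by (simp add: eventually_at_filter)
  have lim: "((\<lambda>a. pmf (q a) (enat j)) \<longlongrightarrow> pmf (q st0) (enat j)) (at st0 within Delta)" for j
  proof (rule coef_conv[where c="\<lambda>a j. pmf (q a) (enat j)" and d="\<lambda>j. pmf (q st0) (enat j)"])
    fix z :: real assume z: "0 < z" "z < 1"
    have "uniform_limit {complex_of_real z} (\<lambda>(s, t). F s t) (F (fst st0) (snd st0)) (at st0 within Delta)"
      by (rule TF_unif[OF st0]) (use z in auto)
    hence "((\<lambda>a. F (fst a) (snd a) (complex_of_real z)) \<longlongrightarrow> F s0 t0 (complex_of_real z)) (at st0 within Delta)"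
      by (simp add: case_prod_beta' e0)
    moreover have "eventually (\<lambda>a. F (fst a) (snd a) (complex_of_real z) = complex_of_real (pgfR (PP (fst a) (snd a)) z)) (at st0 within Delta)"
    proof (rule eventually_mono[OF evD])
      fix a :: "real \<times> real" assume "a \<in> Delta"
      hence "0 \<le> fst a" "fst a \<le> snd a" by (auto simp: Delta_def)
      thus "F (fst a) (snd a) (complex_of_real z) = complex_of_real (pgfR (PP (fst a) (snd a)) z)"
        using F_real z by simp
    qed
    ultimately have "((\<lambda>a. complex_of_real (pgfR (PP (fst a) (snd a)) z)) \<longlongrightarrow> F s0 t0 (complex_of_real z)) (at st0 within Delta)"
      by (rule Lim_transform_eventually)
    hence "((\<lambda>a. complex_of_real (pgfR (PP (fst a) (snd a)) z)) \<longlongrightarrow> complex_of_real (pgfR (PP s0 t0) z)) (at st0 within Delta)"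
      using F_real[OF st0', of z] z by simp
    hence "((\<lambda>a. pgfR (PP (fst a) (snd a)) z) \<longlongrightarrow> pgfR (PP s0 t0) z) (at st0 within Delta)"
      by (simp add: tendsto_of_real_iff)
    hence "((\<lambda>a. pgfR (PP (fst a) (snd a)) z ^ n) \<longlongrightarrow> pgfR (PP s0 t0) z ^ n) (at st0 within Delta)"
      by (intro tendsto_power)
    moreover have "eventually (\<lambda>a. pgfR (PP (fst a) (snd a)) z ^ n = pgfR (q a) z) (at st0 within Delta)"
    proof (rule eventually_mono[OF evD])
      fix a :: "real \<times> real" assume "a \<in> Delta"
      hence "0 \<le> fst a" "fst a \<le> snd a" by (auto simp: Delta_def)
      thus "pgfR (PP (fst a) (snd a)) z ^ n = pgfR (q a) z" using z by (simp add: q_def pgfR_LL)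
    qed
    ultimately have "((\<lambda>a. pgfR (q a) z) \<longlongrightarrow> pgfR (PP s0 t0) z ^ n) (at st0 within Delta)"
      by (rule Lim_transform_eventually)
    moreover have "pgfR (PP s0 t0) z ^ n = pgfR (q st0) z" using z st0' by (simp add: q_def e0 pgfR_LL)
    ultimately have "((\<lambda>a. pgfR (q a) z) \<longlongrightarrow> pgfR (q st0) z) (at st0 within Delta)" by simp
    thus "((\<lambda>a. \<Sum>j. pmf (q a) (enat j) * z ^ j) \<longlongrightarrow> (\<Sum>j. pmf (q st0) (enat j) * z ^ j)) (at st0 within Delta)"
      by (simp add: pgfR_def)
  qed (auto simp: pmf_enat_summable pmf_enat_sum_le)
  have "((\<lambda>a. measure_pmf.expectation (q a) f) \<longlongrightarrow> measure_pmf.expectation (q st0) f) (at st0 within Delta)"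
    by (rule weak_conv[OF f lim])
  moreover have "(\<lambda>(s, t). measure_pmf.expectation (LL s t (enat n)) f) = (\<lambda>a. measure_pmf.expectation (q a) f)"
    by (auto simp: fun_eq_iff q_def)
  ultimately show "((\<lambda>(s, t). measure_pmf.expectation (LL s t (enat n)) f) \<longlongrightarrow>
      (\<lambda>(s, t). measure_pmf.expectation (LL s t (enat n)) f) st0) (at st0 within Delta)"
    by (simp add: q_def case_prod_beta')
qed

lemma LL_branching: "branching_kernels LL"
  unfolding branching_kernels_def
proof (intro conjI allI impI ballI)
  show "\<And>s n. 0 \<le> s \<Longrightarrow> LL s s n = return_pmf n" by (rule LL_L1)
  show "\<And>s t u. 0 \<le> s \<and> s \<le> t \<and> t \<le> u \<Longrightarrow> kernel_comp (LL s t) (LL t u) = LL s u"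
    using LL_L2 by blast
  show "\<And>n (f :: enat \<Rightarrow> real). continuous_on UNIV f \<Longrightarrow> continuous_on Delta (\<lambda>(s, t). measure_pmf.expectation (LL s t (enat n)) f)"
    by (rule LL_cont)
  show "\<And>x. x \<in> Delta \<Longrightarrow> case x of (s, t) \<Rightarrow> \<forall>m n. conv_pmf (LL s t (enat m)) (LL s t (enat n)) = LL s t (enat (m + n))"
    by (auto simp: Delta_def LL_conv simp del: cpow.simps)
  show "\<And>x. x \<in> Delta \<Longrightarrow> case x of (s, t) \<Rightarrow> LL s t 0 = return_pmf 0"
    by (auto simp: Delta_def LL_0)
  show "\<And>x. x \<in> Delta \<Longrightarrow> case x of (s, t) \<Rightarrow> LL s t \<infinity> = return_pmf \<infinity>"
    by (auto simp: Delta_def LL_inf)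
qed

lemma LL_gen: "0 \<le> s \<Longrightarrow> s \<le> t \<Longrightarrow> z \<in> ball 0 1 \<Longrightarrow> F s t z = gen_fun LL s t z"
  using coef(2) by (simp add: gen_fun_pgfC LL_1 PP_def mkpmf_props coef(1))

lemma LL_unique:
  assumes L': "branching_kernels L'" and eq: "\<forall>(s, t)\<in>Delta. \<forall>z\<in>ball 0 1. F s t z = gen_fun L' s t z"
    and st: "0 \<le> s" "s \<le> t"
  shows "L' s t = LL s t"
proof
  fix x show "L' s t x = LL s t x"
  proof (cases x)
    case infinity thus ?thesis using bk_L6[OF L' st] LL_inf[OF st] by simp
  next
    case (enat m)
    have "L' s t (enat m) = LL s t (enat m)"
    proof (rule pmf_enat_eqI)
      fix z :: real assume z: "0 < z" "z < 1"
      have "complex_of_real (pgfR (L' s t 1) z) = gen_fun L' s t (complex_of_real z)"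
        using z by (simp add: gen_fun_pgfC pgfC_pmf_real)
      also have "\<dots> = F s t (complex_of_real z)"
      proof -
        from bspec[OF eq, of "(s, t)"] st have "\<forall>z\<in>unit_disc. F s t z = gen_fun L' s t z" by simp
        moreover have "complex_of_real z \<in> unit_disc" using z by simp
        ultimately show ?thesis by simp
      qed
      also have "\<dots> = complex_of_real (pgfR (PP s t) z)" by (rule F_real[OF st]) (use z in auto)
      finally have e: "pgfR (L' s t 1) z = pgfR (PP s t) z" by simp
      have "pgfR (L' s t (enat m)) z = pgfR (L' s t 1) z ^ m"
        by (rule pgfR_branch[OF bk_L5[OF L' st] bk_L4[OF L' st]]) (use z in auto)
      also have "\<dots> = pgfR (LL s t (enat m)) z" using e z st by (simp add: pgfR_LL)
      finally show "pgfR (L' s t (enat m)) z = pgfR (LL s t (enat m)) z" .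
    qed
    thus ?thesis using enat by simp
  qed
qed

lemma part2:
  "\<exists>L. branching_kernels L \<and>
                 (\<forall>(s, t)\<in>Delta. \<forall>z\<in>unit_disc. F s t z = gen_fun L s t z) \<and>
                 (\<forall>L'. branching_kernels L' \<and>
                        (\<forall>(s, t)\<in>Delta. \<forall>z\<in>unit_disc. F s t z = gen_fun L' s t z) \<longrightarrow>
                        (\<forall>(s, t)\<in>Delta. L' s t = L s t))"
proof (intro exI[of _ LL] conjI allI impI)
  show "branching_kernels LL" by (rule LL_branching)
  show "\<forall>(s, t)\<in>Delta. \<forall>z\<in>unit_disc. F s t z = gen_fun LL s t z" using LL_gen by auto
  fix L' assume H: "branching_kernels L' \<and> (\<forall>(s, t)\<in>Delta. \<forall>z\<in>unit_disc. F s t z = gen_fun L' s t z)"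
  show "\<forall>(s, t)\<in>Delta. L' s t = LL s t"
    using LL_unique[OF conjunct1[OF H] conjunct2[OF H]] by auto
qed

end



theorem mainTheorem16:
  shows "(\<forall>L. branching_kernels L \<longrightarrow>
            top_rev_evol_family (gen_fun L) \<and> (\<forall>(s, t)\<in>Delta. in_PGF (gen_fun L s t))) \<and>
         (\<forall>F. top_rev_evol_family F \<and> (\<forall>(s, t)\<in>Delta. in_PGF (F s t)) \<longrightarrow>
            (\<exists>L. branching_kernels L \<and>
                 (\<forall>(s, t)\<in>Delta. \<forall>z\<in>unit_disc. F s t z = gen_fun L s t z) \<and>
                 (\<forall>L'. branching_kernels L' \<and>
                        (\<forall>(s, t)\<in>Delta. \<forall>z\<in>unit_disc. F s t z = gen_fun L' s t z) \<longrightarrow>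
                        (\<forall>(s, t)\<in>Delta. L' s t = L s t))))"
proof (rule conjI)
  show "\<forall>L. branching_kernels L \<longrightarrow>
            top_rev_evol_family (gen_fun L) \<and> (\<forall>(s, t)\<in>Delta. in_PGF (gen_fun L s t))"
  proof (intro allI impI)
    fix L :: "real \<Rightarrow> real \<Rightarrow> enat \<Rightarrow> enat pmf" assume "branching_kernels L"
    thus "top_rev_evol_family (gen_fun L) \<and> (\<forall>(s, t)\<in>Delta. in_PGF (gen_fun L s t))" by (rule part1)
  qed
  show "\<forall>F. top_rev_evol_family F \<and> (\<forall>(s, t)\<in>Delta. in_PGF (F s t)) \<longrightarrow>
            (\<exists>L. branching_kernels L \<and>
                 (\<forall>(s, t)\<in>Delta. \<forall>z\<in>unit_disc. F s t z = gen_fun L s t z) \<and>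
                 (\<forall>L'. branching_kernels L' \<and>
                        (\<forall>(s, t)\<in>Delta. \<forall>z\<in>unit_disc. F s t z = gen_fun L' s t z) \<longrightarrow>
                        (\<forall>(s, t)\<in>Delta. L' s t = L s t)))"
  proof (intro allI impI)
    fix F :: "real \<Rightarrow> real \<Rightarrow> complex \<Rightarrow> complex"
    assume H: "top_rev_evol_family F \<and> (\<forall>(s, t)\<in>Delta. in_PGF (F s t))"
    show "\<exists>L. branching_kernels L \<and>
                 (\<forall>(s, t)\<in>Delta. \<forall>z\<in>unit_disc. F s t z = gen_fun L s t z) \<and>
                 (\<forall>L'. branching_kernels L' \<and>
                        (\<forall>(s, t)\<in>Delta. \<forall>z\<in>unit_disc. F s t z = gen_fun L' s t z) \<longrightarrow>
                        (\<forall>(s, t)\<in>Delta. L' s t = L s t))"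
      by (rule part2[OF conjunct1[OF H] conjunct2[OF H]])
  qed
qed

end
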